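(* There is an absolute constant $C>0$ such that for every $e_1$-gate graph $G$, $\gamma\big(A(G^{\rm SL})-e_1\big)\ge C\,\gamma\big(A(G)-e_1\big)$.
   Context: For a positive semidefinite matrix $M$, $\gamma(M)$ denotes its smallest nonzero eigenvalue. Let $g_0$ be a fixed $128$-vertex simple graph with vertices labeled $(z,t,j)$, $z\in\{0,1\}$, $t\in[8]$, $j\in\{0,\dots,7\}$, whose adjacency matrix $A(g_0)$ has smallest eigenvalue $e_1=-1-3\sqrt2$, with the corresponding eigenspace having orthonormal basis $|\psi_{z,0}\rangle=\frac{1}{\sqrt8}\big(|z\rangle(|1\rangle+|3\rangle+|5\rangle+|7\rangle)+H|z\rangle(|2\rangle+|8\rangle)+HT|z\rangle(|4\rangle+|6\rangle)\big)|\omega\rangle$ and $|\psi_{z,1}\rangle=|\psi_{z,0}\rangle^*$, where $H=\frac1{\sqrt2}\begin{pmatrix}1&1\\1&-1\end{pmatrix}$, $T=\mathrm{diag}(1,e^{i\pi/4})$, $|\omega\rangle=\frac1{\sqrt8}\sum_{j=0}^7 e^{-i\pi j/4}|j\rangle$. A gate diagram consists of $R$ diagram elements $q\in[R]$, each with a label $U_q\in\{1,H,HT\}$ and node set $\{(q,z,t): z\in\{0,1\},\ t\in\{1,3\}\cup T(U_q)\}$, where $T(H)=\{2,8\}$, $T(HT)=\{4,6\}$, $T(1)=\{5,7\}$; together with a set $\mathcal S$ of nodes and a set $\mathcal E$ of unordered pairs of nodes, such that each node belongs to at most one element of $\mathcal S$ or pair of $\mathcal E$. The associated gate graph $G$ has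 vertices $(q,z,t,j)$ and adjacency matrix $A(G)=1_q\otimes A(g_0)+h_{\mathcal S}+h_{\mathcal E}$, with $h_{\mathcal S}=\sum_{(q,z,t)\in\mathcal S}|q,z,t\rangle\langle q,z,t|\otimes 1_j$ and $h_{\mathcal E}=\sum_{\{(q,z,t),(q',z',t')\}\in\mathcal E}(|q,z,t\rangle+|q',z',t'\rangle)(\langle q,z,t|+\langle q',z',t'|)\otimes 1_j$. $G$ is an $e_1$-gate graph if the smallest eigenvalue of $A(G)$ equals $e_1$. Let $\mathcal N=\{(q,z,t,j): (q,z,t)\notin\mathcal S \text{ and } (q,z,t) \text{ belongs to no pair in } \mathcal E\}$, $\Pi_{\mathcal N}=\sum_{v\in\mathcal N}|v\rangle\langle v|$, and $\Pi_+=|+\rangle\langle+|$ with $|+\rangle=\frac1{\sqrt2}(|0\rangle+|1\rangle)$. The graph $G^{\rm SL}$ has vertex set $V(G)\times\{0,1\}$ and adjacency matrix $A(G^{\rm SL})=A(G)\otimes 1_d+2\,\Pi_{\mathcal N}\otimes\Pi_+$. *)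

theory Defs
  imports Complex_Main
begin

text \<open>A matrix on a finite index set V is a function M :: 'v => 'v => real (entries outside V
  are irrelevant). Eigenvectors are taken over the complex numbers, supported on V.\<close>

definition in_eigenspace :: "'v set \<Rightarrow> ('v \<Rightarrow> 'v \<Rightarrow> real) \<Rightarrow> complex \<Rightarrow> ('v \<Rightarrow> complex) \<Rightarrow> bool" where
  "in_eigenspace V M \<mu> x \<longleftrightarrow> (\<forall>v. v \<notin> V \<longrightarrow> x v = 0) \<and>
     (\<forall>u\<in>V. (\<Sum>w\<in>V. complex_of_real (M u w) * x w) = \<mu> * x u)"

definition is_eigenvalue :: "'v set \<Rightarrow> ('v \<Rightarrow> 'v \<Rightarrow> real) \<Rightarrow> complex \<Rightarrow> bool" where
  "is_eigenvalue V M \<mu> \<longleftrightarrow> (\<exists>x. in_eigenspace V M \<mu> x \<and> (\<exists>v\<in>V. x v \<noteq> 0))"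

definition smallest_eigenvalue :: "'v set \<Rightarrow> ('v \<Rightarrow> 'v \<Rightarrow> real) \<Rightarrow> real \<Rightarrow> bool" where
  "smallest_eigenvalue V M e \<longleftrightarrow> is_eigenvalue V M (complex_of_real e) \<and>
     (\<forall>\<mu>. is_eigenvalue V M \<mu> \<longrightarrow> e \<le> Re \<mu>)"

definition gamma :: "'v set \<Rightarrow> ('v \<Rightarrow> 'v \<Rightarrow> real) \<Rightarrow> real" where
  "gamma V M = Min {x::real. x \<noteq> 0 \<and> is_eigenvalue V M (complex_of_real x)}"

definition shift :: "('v \<Rightarrow> 'v \<Rightarrow> real) \<Rightarrow> real \<Rightarrow> ('v \<Rightarrow> 'v \<Rightarrow> real)" where
  "shift M c = (\<lambda>u w. M u w - (if u = w then c else 0))"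

definition cinner :: "'v set \<Rightarrow> ('v \<Rightarrow> complex) \<Rightarrow> ('v \<Rightarrow> complex) \<Rightarrow> complex" where
  "cinner V x y = (\<Sum>v\<in>V. cnj (x v) * y v)"

definition e1 :: real where "e1 = -1 - 3 * sqrt 2"

definition V0 :: "(nat \<times> nat \<times> nat) set" where
  "V0 = {(z,t,j). z < 2 \<and> t \<in> {1..8} \<and> j < 8}"

definition simple_graph_adj :: "'v set \<Rightarrow> ('v \<Rightarrow> 'v \<Rightarrow> real) \<Rightarrow> bool" where
  "simple_graph_adj V A \<longleftrightarrow> (\<forall>u\<in>V. \<forall>w\<in>V. A u w \<in> {0,1} \<and> A u w = A w u) \<and> (\<forall>u\<in>V. A u u = 0)"

definition Hm :: "nat \<Rightarrow> nat \<Rightarrow> complex" where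
  "Hm z' z = (if z' = 1 \<and> z = 1 then -1 else 1) / complex_of_real (sqrt 2)"

definition Tm :: "nat \<Rightarrow> complex" where
  "Tm z = (if z = 0 then 1 else cis (pi / 4))"

text \<open>coef z t z' = z'-component of the qubit vector attached to position t in psi_{z,0}:
  |z> for t odd, H|z> for t in {2,8}, HT|z> for t in {4,6}.\<close>
definition coef :: "nat \<Rightarrow> nat \<Rightarrow> nat \<Rightarrow> complex" where
  "coef z t z' = (if t \<in> {1,3,5,7} then (if z' = z then 1 else 0)
                  else if t \<in> {2,8} then Hm z' z
                  else if t \<in> {4,6} then Hm z' z * Tm z
                  else 0)"

definition omega :: "nat \<Rightarrow> complex" where
  "omega j = cis (- pi * real j / 4) / complex_of_real (sqrt 8)"

definition psi0 :: "nat \<Rightarrow> nat \<times> nat \<times> nat \<Rightarrow> complex" where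
  "psi0 z = (\<lambda>(z',t,j). if (z',t,j) \<in> V0 then coef z t z' * omega j / complex_of_real (sqrt 8) else 0)"

definition psi1 :: "nat \<Rightarrow> nat \<times> nat \<times> nat \<Rightarrow> complex" where
  "psi1 z = (\<lambda>v. cnj (psi0 z v))"

definition g0_spec :: "(nat \<times> nat \<times> nat \<Rightarrow> nat \<times> nat \<times> nat \<Rightarrow> real) \<Rightarrow> bool" where
  "g0_spec A0 \<longleftrightarrow> simple_graph_adj V0 A0 \<and> smallest_eigenvalue V0 A0 e1 \<and>
     (let B = [psi0 0, psi0 1, psi1 0, psi1 1] in
       (\<forall>i<4. \<forall>k<4. cinner V0 (B ! i) (B ! k) = (if i = k then 1 else 0)) \<and>
       (\<forall>x. in_eigenspace V0 A0 (complex_of_real e1) x \<longleftrightarrow>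
            (\<exists>c :: nat \<Rightarrow> complex. x = (\<lambda>v. \<Sum>i<4. c i * (B ! i) v))))"

datatype gate_label = GId | GH | GHT

definition Tset :: "gate_label \<Rightarrow> nat set" where
  "Tset U = (case U of GH \<Rightarrow> {2,8} | GHT \<Rightarrow> {4,6} | GId \<Rightarrow> {5,7})"

definition diagram_nodes :: "nat \<Rightarrow> (nat \<Rightarrow> gate_label) \<Rightarrow> (nat \<times> nat \<times> nat) set" where
  "diagram_nodes R U = {(q,z,t). q \<in> {1..R} \<and> z < 2 \<and> t \<in> {1,3} \<union> Tset (U q)}"

definition gate_diagram :: "nat \<Rightarrow> (nat \<Rightarrow> gate_label) \<Rightarrow> (nat \<times> nat \<times> nat) set
     \<Rightarrow> (nat \<times> nat \<times> nat) set set \<Rightarrow> bool" where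
  "gate_diagram R U S E \<longleftrightarrow>
     S \<subseteq> diagram_nodes R U \<and>
     (\<forall>p\<in>E. \<exists>a b. a \<noteq> b \<and> p = {a, b} \<and> a \<in> diagram_nodes R U \<and> b \<in> diagram_nodes R U) \<and>
     (\<forall>p\<in>E. p \<inter> S = {}) \<and>
     (\<forall>p\<in>E. \<forall>p'\<in>E. p \<noteq> p' \<longrightarrow> p \<inter> p' = {})"

definition VG :: "nat \<Rightarrow> (nat \<times> nat \<times> nat \<times> nat) set" where
  "VG R = {(q,z,t,j). q \<in> {1..R} \<and> z < 2 \<and> t \<in> {1..8} \<and> j < 8}"

text \<open>A(G) = 1_q (x) A(g0) + h_S + h_E.\<close>
definition AG :: "(nat \<times> nat \<times> nat \<Rightarrow> nat \<times> nat \<times> nat \<Rightarrow> real) \<Rightarrow> (nat \<times> nat \<times> nat) set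
     \<Rightarrow> (nat \<times> nat \<times> nat) set set \<Rightarrow> (nat \<times> nat \<times> nat \<times> nat \<Rightarrow> nat \<times> nat \<times> nat \<times> nat \<Rightarrow> real)" where
  "AG A0 S E = (\<lambda>(q,z,t,j) (q',z',t',j').
      (if q = q' then A0 (z,t,j) (z',t',j') else 0)
    + (if (q,z,t,j) = (q',z',t',j') \<and> (q,z,t) \<in> S then 1 else 0)
    + (if j = j' \<and> (\<exists>p\<in>E. (q,z,t) \<in> p \<and> (q',z',t') \<in> p) then 1 else 0))"

definition e1_gate_graph :: "(nat \<times> nat \<times> nat \<Rightarrow> nat \<times> nat \<times> nat \<Rightarrow> real) \<Rightarrow> nat
     \<Rightarrow> (nat \<times> nat \<times> nat) set \<Rightarrow> (nat \<times> nat \<times> nat) set set \<Rightarrow> bool" where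
  "e1_gate_graph A0 R S E \<longleftrightarrow> smallest_eigenvalue (VG R) (AG A0 S E) e1"

definition Nset :: "nat \<Rightarrow> (nat \<times> nat \<times> nat) set \<Rightarrow> (nat \<times> nat \<times> nat) set set
     \<Rightarrow> (nat \<times> nat \<times> nat \<times> nat) set" where
  "Nset R S E = {(q,z,t,j) \<in> VG R. (q,z,t) \<notin> S \<and> (\<forall>p\<in>E. (q,z,t) \<notin> p)}"

definition VSL :: "nat \<Rightarrow> ((nat \<times> nat \<times> nat \<times> nat) \<times> nat) set" where
  "VSL R = VG R \<times> {0, 1}"

text \<open>A(G^SL) = A(G) (x) 1_2 + 2 Pi_N (x) Pi_+, with Pi_+ having all entries 1/2.\<close>
definition ASL :: "(nat \<times> nat \<times> nat \<Rightarrow> nat \<times> nat \<times> nat \<Rightarrow> real) \<Rightarrow> nat \<Rightarrow> (nat \<times> nat \<times> nat) set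
     \<Rightarrow> (nat \<times> nat \<times> nat) set set
     \<Rightarrow> ((nat \<times> nat \<times> nat \<times> nat) \<times> nat \<Rightarrow> (nat \<times> nat \<times> nat \<times> nat) \<times> nat \<Rightarrow> real)" where
  "ASL A0 R S E = (\<lambda>(v,a) (w,b).
      (if a = b then AG A0 S E v w else 0)
    + 2 * (if v = w \<and> v \<in> Nset R S E then 1 else 0) * (1/2))"

end

theory Submission
  imports Defs "HOL-Analysis.Analysis"
begin


definition supp :: "'v set \<Rightarrow> ('v \<Rightarrow> complex) \<Rightarrow> bool" where
  "supp V x \<longleftrightarrow> (\<forall>v. v \<notin> V \<longrightarrow> x v = 0)"

definition mv :: "'v set \<Rightarrow> ('v \<Rightarrow> 'v \<Rightarrow> real) \<Rightarrow> ('v \<Rightarrow> complex) \<Rightarrow> 'v \<Rightarrow> complex" where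
  "mv V M x = (\<lambda>u. if u \<in> V then (\<Sum>w\<in>V. complex_of_real (M u w) * x w) else 0)"

definition nrm :: "'v set \<Rightarrow> ('v \<Rightarrow> complex) \<Rightarrow> real" where
  "nrm V x = (\<Sum>v\<in>V. (cmod (x v))\<^sup>2)"

definition qf :: "'v set \<Rightarrow> ('v \<Rightarrow> 'v \<Rightarrow> real) \<Rightarrow> ('v \<Rightarrow> complex) \<Rightarrow> real" where
  "qf V M x = Re (cinner V x (mv V M x))"

definition symm :: "'v set \<Rightarrow> ('v \<Rightarrow> 'v \<Rightarrow> real) \<Rightarrow> bool" where
  "symm V M \<longleftrightarrow> (\<forall>u\<in>V. \<forall>w\<in>V. M u w = M w u)"

lemma supp_mv: "supp V (mv V M x)"
  by (simp add: supp_def mv_def)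

lemma cinner_self: "cinner V x x = complex_of_real (nrm V x)"
  unfolding cinner_def nrm_def of_real_sum complex_norm_square
  by (simp add: mult.commute)

lemma nrm_nonneg: "nrm V x \<ge> 0"
  unfolding nrm_def by (simp add: sum_nonneg)

lemma nrm_eq_Re: "nrm V x = Re (cinner V x x)"
  by (simp add: cinner_self)

lemma nrm_zero_iff: "finite V \<Longrightarrow> nrm V x = 0 \<longleftrightarrow> (\<forall>v\<in>V. x v = 0)"
  unfolding nrm_def by (simp add: sum_nonneg_eq_0_iff)

lemma cinner_add_right: "cinner V x (\<lambda>v. y v + z v) = cinner V x y + cinner V x z"
  unfolding cinner_def by (simp add: distrib_left sum.distrib)

lemma cinner_add_left: "cinner V (\<lambda>v. y v + z v) x = cinner V y x + cinner V z x"
  unfolding cinner_def by (simp add: distrib_right sum.distrib)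

lemma cinner_scale_right: "cinner V x (\<lambda>v. c * y v) = c * cinner V x y"
  unfolding cinner_def by (simp add: sum_distrib_left mult.left_commute)

lemma cinner_scale_left: "cinner V (\<lambda>v. c * y v) x = cnj c * cinner V y x"
  unfolding cinner_def by (simp add: sum_distrib_left mult.assoc)

lemma cinner_commute: "cinner V y x = cnj (cinner V x y)"
  unfolding cinner_def by (simp add: mult.commute)

lemma cinner_diff_right: "cinner V x (\<lambda>v. y v - z v) = cinner V x y - cinner V x z"
  unfolding cinner_def by (simp add: right_diff_distrib sum_subtractf)

lemma cinner_diff_left: "cinner V (\<lambda>v. y v - z v) x = cinner V y x - cinner V z x"
  unfolding cinner_def by (simp add: left_diff_distrib sum_subtractf)

lemma cinner_zero_right: "(\<forall>v\<in>V. y v = 0) \<Longrightarrow> cinner V x y = 0"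
  unfolding cinner_def by simp

lemma cinner_zero_left: "(\<forall>v\<in>V. y v = 0) \<Longrightarrow> cinner V y x = 0"
  unfolding cinner_def by simp

lemma mv_add: "mv V M (\<lambda>v. x v + y v) = (\<lambda>v. mv V M x v + mv V M y v)"
  unfolding mv_def by (auto simp: distrib_left sum.distrib)

lemma mv_scale: "mv V M (\<lambda>v. c * x v) = (\<lambda>v. c * mv V M x v)"
  unfolding mv_def by (auto simp: sum_distrib_left mult.left_commute)

lemma mv_diff: "mv V M (\<lambda>v. x v - y v) = (\<lambda>v. mv V M x v - mv V M y v)"
  unfolding mv_def by (auto simp: right_diff_distrib sum_subtractf)

lemma herm:
  assumes "symm V M"
  shows "cinner V x (mv V M y) = cinner V (mv V M x) y"
proof -
  have "cinner V x (mv V M y) = (\<Sum>u\<in>V. \<Sum>w\<in>V. cnj (x u) * complex_of_real (M u w) * y w)"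
    unfolding cinner_def mv_def by (simp add: sum_distrib_left mult.assoc)
  also have "\<dots> = (\<Sum>w\<in>V. \<Sum>u\<in>V. cnj (x u) * complex_of_real (M u w) * y w)"
    by (rule sum.swap)
  also have "\<dots> = cinner V (mv V M x) y"
    unfolding cinner_def mv_def
  proof (intro sum.cong refl)
    fix w assume w: "w \<in> V"
    have "(\<Sum>u\<in>V. cnj (x u) * complex_of_real (M u w) * y w)
        = (\<Sum>u\<in>V. cnj (complex_of_real (M w u) * x u)) * y w"
      unfolding sum_distrib_right
      using assms w unfolding symm_def by (intro sum.cong refl) (simp add: mult.commute)
    also have "\<dots> = cnj (\<Sum>u\<in>V. complex_of_real (M w u) * x u) * y w"
      by (simp add: cnj_sum)
    finally show "(\<Sum>u\<in>V. cnj (x u) * complex_of_real (M u w) * y w)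
        = cnj (if w \<in> V then \<Sum>u\<in>V. complex_of_real (M w u) * x u else 0) * y w"
      using w by simp
  qed
  finally show ?thesis .
qed

lemma qf_real: "symm V M \<Longrightarrow> cinner V x (mv V M x) = complex_of_real (qf V M x)"
proof -
  assume s: "symm V M"
  have "cinner V x (mv V M x) = cnj (cinner V x (mv V M x))"
    using herm[OF s, of x x] cinner_commute[of V x "mv V M x"] by simp
  hence "Im (cinner V x (mv V M x)) = 0"
    by (metis cnj.sel(2) neg_equal_zero)
  thus ?thesis unfolding qf_def by (simp add: complex_eqI)
qed


lemma qf_add:
  assumes "symm V M"
  shows "qf V M (\<lambda>v. y v + complex_of_real t * z v)
       = qf V M y + 2 * t * Re (cinner V z (mv V M y)) + t\<^sup>2 * qf V M z"
proof -
  have h: "cinner V y (mv V M z) = cnj (cinner V z (mv V M y))"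
    using herm[OF assms, of y z] cinner_commute[of V "mv V M y" z] by simp
  show ?thesis
    unfolding qf_def mv_add mv_scale cinner_add_left cinner_add_right cinner_scale_left
      cinner_scale_right h
    by (simp add: power2_eq_square algebra_simps)
qed

lemma nrm_add:
  "nrm V (\<lambda>v. y v + complex_of_real t * z v)
       = nrm V y + 2 * t * Re (cinner V z y) + t\<^sup>2 * nrm V z"
proof -
  have h: "cinner V y z = cnj (cinner V z y)"
    using cinner_commute[of V z y] by simp
  show ?thesis
    unfolding nrm_eq_Re cinner_add_left cinner_add_right cinner_scale_left
      cinner_scale_right h
    by (simp add: power2_eq_square algebra_simps)
qed

lemma qf_scale: "qf V M (\<lambda>v. c * x v) = (cmod c)\<^sup>2 * qf V M x"
proof -
  have "cnj c * c = complex_of_real ((cmod c)\<^sup>2)"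
    by (metis complex_norm_square mult.commute)
  hence "Re (cnj c * (c * cinner V x (mv V M x))) = (cmod c)\<^sup>2 * Re (cinner V x (mv V M x))"
    by (simp only: mult.assoc[symmetric]) simp
  thus ?thesis unfolding qf_def mv_scale cinner_scale_left cinner_scale_right by simp
qed

lemma nrm_scale: "nrm V (\<lambda>v. c * x v) = (cmod c)\<^sup>2 * nrm V x"
  unfolding nrm_def by (simp add: norm_mult power_mult_distrib sum_distrib_left)

lemma quad_zero:
  fixes a b :: real
  assumes "\<forall>t. 2 * t * a + t\<^sup>2 * b \<ge> 0"
  shows "a = 0"
proof (rule ccontr)
  assume a: "a \<noteq> 0"
  define t where "t = - a / (2 * (\<bar>b\<bar> + 1))"
  have d: "\<bar>b\<bar> + 1 > 0" by simp
  have "2 * t * a = - a\<^sup>2 / (\<bar>b\<bar> + 1)"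
    unfolding t_def using d by (simp add: power2_eq_square field_simps)
  moreover have "t\<^sup>2 * b \<le> t\<^sup>2 * \<bar>b\<bar>" by (simp add: mult_left_mono)
  moreover have "t\<^sup>2 * \<bar>b\<bar> = a\<^sup>2 * \<bar>b\<bar> / (4 * (\<bar>b\<bar> + 1)\<^sup>2)"
    unfolding t_def by (simp add: power2_eq_square field_simps)
  moreover have "a\<^sup>2 * \<bar>b\<bar> / (4 * (\<bar>b\<bar> + 1)\<^sup>2) \<le> a\<^sup>2 / (4 * (\<bar>b\<bar> + 1))"
  proof -
    have "a\<^sup>2 * \<bar>b\<bar> \<le> a\<^sup>2 * (\<bar>b\<bar> + 1)" by (simp add: mult_left_mono)
    hence "a\<^sup>2 * \<bar>b\<bar> / (4 * (\<bar>b\<bar> + 1)\<^sup>2) \<le> a\<^sup>2 * (\<bar>b\<bar> + 1) / (4 * (\<bar>b\<bar> + 1)\<^sup>2)"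
      using d by (intro divide_right_mono) auto
    also have "\<dots> = a\<^sup>2 / (4 * (\<bar>b\<bar> + 1))"
      using d by (simp add: power2_eq_square)
    finally show ?thesis .
  qed
  moreover have "a\<^sup>2 > 0" using a by simp
  moreover have "a\<^sup>2 / (4 * (\<bar>b\<bar> + 1)) < a\<^sup>2 / (\<bar>b\<bar> + 1)"
    using d \<open>a\<^sup>2 > 0\<close> by (intro divide_strict_left_mono) auto
  ultimately have "2 * t * a + t\<^sup>2 * b < 0" by linarith
  thus False using assms by (meson not_le)
qed

lemma cinner_ii: "cinner V (\<lambda>v. \<i> * z v) w = - \<i> * cinner V z w"
  using cinner_scale_left[of V \<i> z w] by simp

lemma complex_zero_ReIm: "Re c = 0 \<Longrightarrow> Im c = 0 \<Longrightarrow> c = 0"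
  by (simp add: complex_eqI)

lemma coord_cont: "continuous_on S (\<lambda>x::'v \<Rightarrow> 'b::topological_space. x v)"
  by (rule continuous_on_subset[OF continuous_on_product_coordinates]) auto

lemma nrm_cont: "continuous_on S (\<lambda>x. nrm V x)"
  unfolding nrm_def by (intro continuous_intros coord_cont)

lemma qf_expr: "qf V M x = Re (\<Sum>u\<in>V. cnj (x u) * (\<Sum>w\<in>V. complex_of_real (M u w) * x w))"
  unfolding qf_def cinner_def mv_def by simp

lemma qf_cont: "continuous_on S (\<lambda>x. qf V M x)"
  unfolding qf_expr by (intro continuous_intros coord_cont)

lemma cinner_cont: "continuous_on S (\<lambda>x. cinner V k x)"
  unfolding cinner_def by (intro continuous_intros coord_cont)

lemma mv_cont: "continuous_on S (\<lambda>x. mv V M x u)"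
  unfolding mv_def by (cases "u \<in> V") (auto intro!: continuous_intros coord_cont)

lemma compact_box:
  "compact {x::'v \<Rightarrow> complex. \<forall>v. x v \<in> (if v \<in> V then cball 0 r else {0})}"
proof -
  have "compactin (product_topology (\<lambda>i. euclidean) UNIV)
          (PiE UNIV (\<lambda>v. if v \<in> V then cball (0::complex) r else {0}))"
    by (subst compactin_PiE) auto
  moreover have "PiE UNIV (\<lambda>v. if v \<in> V then cball (0::complex) r else {0})
      = {x::'v \<Rightarrow> complex. \<forall>v. x v \<in> (if v \<in> V then cball 0 r else {0})}"
    by (auto simp: PiE_UNIV_domain Pi_def)
  ultimately show ?thesis
    by (simp add: euclidean_product_topology)
qed

lemma closed_supp: "closed {x::'v \<Rightarrow> complex. supp V x}"
proof -
  have "{x::'v \<Rightarrow> complex. supp V x} = (\<Inter>v\<in>-V. {x. x v = 0})"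
    by (auto simp: supp_def)
  moreover have "closed {x::'v \<Rightarrow> complex. x v = 0}" for v
    by (intro closed_Collect_eq coord_cont continuous_intros)
  ultimately show ?thesis by auto
qed


lemma sq_le_nrm: "finite V \<Longrightarrow> v \<in> V \<Longrightarrow> (cmod (x v))\<^sup>2 \<le> nrm V x"
  unfolding nrm_def by (rule member_le_sum) auto

lemma normalize:
  assumes "nrm V x \<noteq> 0"
  shows "nrm V (\<lambda>v. complex_of_real (1 / sqrt (nrm V x)) * x v) = 1"
proof -
  have p: "nrm V x > 0" using assms nrm_nonneg[of V x] by linarith
  show ?thesis unfolding nrm_scale using p
    by (simp add: norm_divide power_divide real_sqrt_pow2 abs_of_pos)
qed

lemma qf_zero: "(\<forall>v\<in>V. x v = 0) \<Longrightarrow> qf V M x = 0"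
  unfolding qf_def by (simp add: cinner_zero_left)

lemma rayleigh_min:
  fixes W :: "('v \<Rightarrow> complex) set"
  assumes fin: "finite V" and sym: "symm V M"
   and Wsupp: "\<And>x. x\<in>W \<Longrightarrow> supp V x"
   and Wadd: "\<And>x y. x\<in>W \<Longrightarrow> y\<in>W \<Longrightarrow> (\<lambda>v. x v + y v) \<in> W"
   and Wscale: "\<And>x c. x\<in>W \<Longrightarrow> (\<lambda>v. c * x v) \<in> W"
   and Wclosed: "closed W" and Winv: "\<And>x. x\<in>W \<Longrightarrow> mv V M x \<in> W"
   and x0: "x0 \<in> W" "nrm V x0 \<noteq> 0"
  shows "\<exists>y\<in>W. nrm V y = 1 \<and> mv V M y = (\<lambda>v. complex_of_real (qf V M y) * y v)
            \<and> (\<forall>x\<in>W. qf V M x \<ge> qf V M y * nrm V x)"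
proof -
  define B where "B = {x::'v \<Rightarrow> complex. \<forall>v. x v \<in> (if v \<in> V then cball 0 1 else {0})}"
  define S where "S = B \<inter> (W \<inter> {x. nrm V x = 1})"
  have cB: "compact B" unfolding B_def by (rule compact_box)
  have "closed {x::'v\<Rightarrow>complex. nrm V x = 1}"
    by (intro closed_Collect_eq nrm_cont continuous_intros)
  hence cS: "compact S" unfolding S_def
    using cB Wclosed by (intro compact_Int_closed closed_Int) auto
  have inB: "x \<in> B" if "x \<in> W" "nrm V x = 1" for x
  proof -
    have "x v \<in> (if v \<in> V then cball 0 1 else {0})" for v
    proof (cases "v \<in> V")
      case True
      have "(cmod (x v))\<^sup>2 \<le> 1" using sq_le_nrm[OF fin True, of x] that by simp
      hence "cmod (x v) \<le> 1" by (simp add: power_le_one_iff abs_square_le_1)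
      thus ?thesis using True by simp
    next
      case False thus ?thesis using Wsupp[OF that(1)] by (simp add: supp_def)
    qed
    thus ?thesis unfolding B_def by blast
  qed
  have S_eq: "S = W \<inter> {x. nrm V x = 1}" unfolding S_def using inB by blast
  define nz where "nz x = (\<lambda>v. complex_of_real (1 / sqrt (nrm V x)) * x v)" for x
  have nzS: "nz x \<in> S" if "x \<in> W" "nrm V x \<noteq> 0" for x
    unfolding S_eq nz_def using that normalize[OF that(2)] Wscale[OF that(1)] by blast
  have "S \<noteq> {}" using nzS[OF x0] by blast
  then obtain y where yS: "y \<in> S" and ymin: "\<forall>x\<in>S. qf V M y \<le> qf V M x"
    using continuous_attains_inf[OF cS _ qf_cont] by blast
  define m where "m = qf V M y"
  have yW: "y \<in> W" and y1: "nrm V y = 1" using yS S_eq by auto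
  have lb: "qf V M x \<ge> m * nrm V x" if "x \<in> W" for x
  proof (cases "nrm V x = 0")
    case True
    hence z: "\<forall>v\<in>V. x v = 0" using nrm_zero_iff[OF fin] by blast
    show ?thesis using True qf_zero[OF z] by simp
  next
    case False
    have p: "nrm V x > 0" using False nrm_nonneg[of V x] by linarith
    have "m \<le> qf V M (nz x)" using ymin nzS[OF that False] unfolding m_def by blast
    also have "qf V M (nz x) = qf V M x / nrm V x"
      unfolding nz_def qf_scale using p
      by (simp add: norm_divide power_divide real_sqrt_pow2 abs_of_pos)
    finally show ?thesis using p by (simp add: field_simps)
  qed
  have ReZ: "Re (cinner V z (\<lambda>v. mv V M y v - complex_of_real m * y v)) = 0" if zW: "z \<in> W" for z
  proof -
    have "\<forall>t. 2 * t * (Re (cinner V z (mv V M y)) - m * Re (cinner V z y))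
               + t\<^sup>2 * (qf V M z - m * nrm V z) \<ge> 0"
    proof
      fix t :: real
      have "(\<lambda>v. y v + complex_of_real t * z v) \<in> W" using Wadd[OF yW Wscale[OF zW]] by blast
      from lb[OF this] show "2 * t * (Re (cinner V z (mv V M y)) - m * Re (cinner V z y))
               + t\<^sup>2 * (qf V M z - m * nrm V z) \<ge> 0"
        unfolding qf_add[OF sym] nrm_add using y1 m_def by (simp add: algebra_simps)
    qed
    from quad_zero[OF this] show ?thesis
      unfolding cinner_diff_right cinner_scale_right by simp
  qed
  have Z: "cinner V z (\<lambda>v. mv V M y v - complex_of_real m * y v) = 0" if zW: "z \<in> W" for z
  proof (rule complex_zero_ReIm)
    show "Re (cinner V z (\<lambda>v. mv V M y v - complex_of_real m * y v)) = 0" by (rule ReZ[OF zW])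
    have "Re (cinner V (\<lambda>v. \<i> * z v) (\<lambda>v. mv V M y v - complex_of_real m * y v)) = 0"
      by (rule ReZ[OF Wscale[OF zW]])
    thus "Im (cinner V z (\<lambda>v. mv V M y v - complex_of_real m * y v)) = 0"
      unfolding cinner_ii by simp
  qed
  define w where "w = (\<lambda>v. mv V M y v - complex_of_real m * y v)"
  have "(\<lambda>v. mv V M y v + (- complex_of_real m) * y v) \<in> W"
    by (rule Wadd[OF Winv[OF yW] Wscale[OF yW]])
  hence wW: "w \<in> W" unfolding w_def by simp
  have "cinner V w w = 0" using Z[OF wW] unfolding w_def .
  hence "nrm V w = 0" unfolding cinner_self by simp
  hence w0: "\<forall>v\<in>V. w v = 0" using nrm_zero_iff[OF fin] by blast
  have "mv V M y = (\<lambda>v. complex_of_real m * y v)"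
  proof
    fix v show "mv V M y v = complex_of_real m * y v"
    proof (cases "v \<in> V")
      case True thus ?thesis using w0 unfolding w_def by auto
    next
      case False thus ?thesis using Wsupp[OF yW] by (simp add: mv_def supp_def)
    qed
  qed
  thus ?thesis using yW y1 lb unfolding m_def by blast
qed


lemma finite_argmax:
  fixes f :: "'a \<Rightarrow> real"
  assumes "finite S" "S \<noteq> {}"
  shows "\<exists>x\<in>S. \<forall>y\<in>S. f y \<le> f x"
proof -
  have "Max (f ` S) \<in> f ` S" using assms by (intro Max_in) auto
  then obtain x where "x \<in> S" "f x = Max (f ` S)" by auto
  moreover have "\<forall>y\<in>S. f y \<le> Max (f ` S)" using assms by auto
  ultimately show ?thesis by metis
qed

lemma projection:
  fixes W :: "('v \<Rightarrow> complex) set"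
  assumes fin: "finite V"
   and Wsupp: "\<And>x. x\<in>W \<Longrightarrow> supp V x"
   and Wadd: "\<And>x y. x\<in>W \<Longrightarrow> y\<in>W \<Longrightarrow> (\<lambda>v. x v + y v) \<in> W"
   and Wscale: "\<And>x c. x\<in>W \<Longrightarrow> (\<lambda>v. c * x v) \<in> W"
   and Wclosed: "closed W" and W0: "(\<lambda>v. 0) \<in> W"
   and y: "supp V y"
  shows "\<exists>k\<in>W. \<forall>z\<in>W. cinner V z (\<lambda>v. y v - k v) = 0"
proof -
  define r where "r = 2 * sqrt (nrm V y)"
  define f where "f k = nrm V (\<lambda>v. y v - k v)" for k
  define B where "B = {x::'v \<Rightarrow> complex. \<forall>v. x v \<in> (if v \<in> V then cball 0 r else {0})}"
  define T where "T = B \<inter> (W \<inter> {k. f k \<le> nrm V y})"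
  have cB: "compact B" unfolding B_def by (rule compact_box)
  have cf: "continuous_on S f" for S
    unfolding f_def nrm_def by (intro continuous_intros coord_cont)
  have "closed {k. f k \<le> nrm V y}"
    by (intro closed_Collect_le cf continuous_intros)
  hence cT: "compact T" unfolding T_def
    using cB Wclosed by (intro compact_Int_closed closed_Int) auto
  have inB: "k \<in> B" if "k \<in> W" "f k \<le> nrm V y" for k
  proof -
    have "k v \<in> (if v \<in> V then cball 0 r else {0})" for v
    proof (cases "v \<in> V")
      case True
      have a: "cmod (y v - k v) \<le> sqrt (nrm V y)"
        using sq_le_nrm[OF fin True, of "\<lambda>v. y v - k v"] that(2) unfolding f_def
        by (intro real_le_rsqrt) simp
      have b: "cmod (y v) \<le> sqrt (nrm V y)"
        using sq_le_nrm[OF fin True, of y] by (intro real_le_rsqrt) simp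
      have "cmod (k v) \<le> cmod (y v) + cmod (y v - k v)"
        using norm_triangle_ineq4[of "y v" "y v - k v"] by simp
      hence "cmod (k v) \<le> r" using a b unfolding r_def by linarith
      thus ?thesis using True by simp
    next
      case False thus ?thesis using Wsupp[OF that(1)] by (simp add: supp_def)
    qed
    thus ?thesis unfolding B_def by blast
  qed
  have T_eq: "T = W \<inter> {k. f k \<le> nrm V y}" unfolding T_def using inB by blast
  have f0: "f (\<lambda>v. 0) = nrm V y" unfolding f_def by simp
  have "(\<lambda>v. 0) \<in> T" unfolding T_eq using W0 f0 by simp
  hence "T \<noteq> {}" by blast
  then obtain k where kT: "k \<in> T" and kmin: "\<forall>x\<in>T. f k \<le> f x"
    using continuous_attains_inf[OF cT _ cf] by blast
  have kW: "k \<in> W" using kT T_eq by auto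
  have gmin: "f k \<le> f x" if "x \<in> W" for x
  proof (cases "f x \<le> nrm V y")
    case True thus ?thesis using kmin that T_eq by auto
  next
    case False
    have "f k \<le> f (\<lambda>v. 0)" using kmin \<open>(\<lambda>v. 0) \<in> T\<close> by blast
    thus ?thesis using False f0 by linarith
  qed
  define d where "d = (\<lambda>v. y v - k v)"
  have ReZ: "Re (cinner V z d) = 0" if zW: "z \<in> W" for z
  proof -
    have "\<forall>t. 2 * t * (- Re (cinner V z d)) + t\<^sup>2 * nrm V z \<ge> 0"
    proof
      fix t :: real
      have "(\<lambda>v. k v + complex_of_real t * z v) \<in> W" using Wadd[OF kW Wscale[OF zW]] by blast
      have eq: "(\<lambda>v. y v - (k v + complex_of_real t * z v)) = (\<lambda>v. d v + complex_of_real (- t) * z v)"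
        unfolding d_def by (rule ext) simp
      from gmin[OF \<open>(\<lambda>v. k v + complex_of_real t * z v) \<in> W\<close>] have "f k \<le> nrm V (\<lambda>v. d v + complex_of_real (- t) * z v)"
        unfolding f_def eq .
      thus "2 * t * (- Re (cinner V z d)) + t\<^sup>2 * nrm V z \<ge> 0"
        unfolding nrm_add f_def d_def[symmetric] by simp
    qed
    from quad_zero[OF this] show ?thesis by simp
  qed
  have "cinner V z d = 0" if zW: "z \<in> W" for z
  proof (rule complex_zero_ReIm)
    show "Re (cinner V z d) = 0" by (rule ReZ[OF zW])
    have "Re (cinner V (\<lambda>v. \<i> * z v) d) = 0" by (rule ReZ[OF Wscale[OF zW]])
    thus "Im (cinner V z d) = 0" unfolding cinner_ii by simp
  qed
  thus ?thesis using kW unfolding d_def by blast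
qed

lemma cinner_sum_left:
  "cinner V (\<lambda>v. \<Sum>i\<in>F. c i * f i v) g = (\<Sum>i\<in>F. cnj (c i) * cinner V (f i) g)"
  unfolding cinner_def cnj_sum sum_distrib_right sum_distrib_left
  by (subst sum.swap) (simp add: mult.assoc)

lemma cinner_sum_right:
  "cinner V g (\<lambda>v. \<Sum>i\<in>F. c i * f i v) = (\<Sum>i\<in>F. c i * cinner V g (f i))"
  unfolding cinner_def sum_distrib_right sum_distrib_left
  by (subst sum.swap) (simp add: mult.left_commute)

lemma cinner_orthonormal:
  assumes fin: "finite F"
    and on: "\<forall>i\<in>F. \<forall>j\<in>F. cinner V (f i) (f j) = (if i = j then 1 else 0)"
  shows "cinner V (\<lambda>v. \<Sum>i\<in>F. c i * f i v) (\<lambda>v. \<Sum>j\<in>F. d j * f j v) = (\<Sum>i\<in>F. cnj (c i) * d i)"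
proof -
  have "cinner V (\<lambda>v. \<Sum>i\<in>F. c i * f i v) (\<lambda>v. \<Sum>j\<in>F. d j * f j v)
      = (\<Sum>i\<in>F. cnj (c i) * (\<Sum>j\<in>F. d j * cinner V (f i) (f j)))"
    unfolding cinner_sum_left cinner_sum_right ..
  also have "\<dots> = (\<Sum>i\<in>F. cnj (c i) * d i)"
  proof (intro sum.cong refl)
    fix i assume i: "i \<in> F"
    have "(\<Sum>j\<in>F. d j * cinner V (f i) (f j)) = (\<Sum>j\<in>F. if j = i then d j else 0)"
      using on i by (intro sum.cong refl) auto
    also have "\<dots> = d i" using fin i by simp
    finally show "cnj (c i) * (\<Sum>j\<in>F. d j * cinner V (f i) (f j)) = cnj (c i) * d i" by simp
  qed
  finally show ?thesis .
qed

lemma eig_mv: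
  assumes "in_eigenspace V M \<mu> x"
  shows "mv V M x = (\<lambda>u. \<mu> * x u)" "supp V x"
  using assms unfolding in_eigenspace_def mv_def supp_def by auto

lemma eig_scale:
  assumes "in_eigenspace V M \<mu> x"
  shows "in_eigenspace V M \<mu> (\<lambda>v. c * x v)"
proof -
  have "(\<Sum>w\<in>V. complex_of_real (M u w) * (c * x w)) = c * (\<Sum>w\<in>V. complex_of_real (M u w) * x w)" for u
    by (simp add: sum_distrib_left mult.left_commute)
  thus ?thesis using assms unfolding in_eigenspace_def by (simp add: mult.left_commute)
qed

lemma eig_orth:
  assumes sym: "symm V M"
    and x: "in_eigenspace V M (complex_of_real a) x" and y: "in_eigenspace V M (complex_of_real b) y"
    and ab: "a \<noteq> b"
  shows "cinner V x y = 0"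
proof -
  have "cinner V x (mv V M y) = cinner V (mv V M x) y" by (rule herm[OF sym])
  hence "complex_of_real b * cinner V x y = complex_of_real a * cinner V x y"
    unfolding eig_mv(1)[OF x] eig_mv(1)[OF y] cinner_scale_left cinner_scale_right by simp
  thus ?thesis using ab by simp
qed

lemma Re_cnj_mult: "Re (cnj z * z) = (cmod z)\<^sup>2"
  by (metis Re_complex_of_real complex_norm_square mult.commute)

lemma bessel:
  assumes fin: "finite V" and finF: "finite F" and v: "v \<in> V"
    and on: "\<forall>i\<in>F. \<forall>j\<in>F. cinner V (f i) (f j) = (if i = j then 1 else 0)"
  shows "(\<Sum>i\<in>F. (cmod (f i v))\<^sup>2) \<le> 1"
proof -
  define e where "e = (\<lambda>u. if u = v then (1::complex) else 0)"
  define a where "a i = cinner V (f i) e" for i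
  have a_eq: "a i = cnj (f i v)" for i
    unfolding a_def cinner_def e_def using fin v by (simp add: if_distrib cong: if_cong)
  define s where "s = (\<lambda>u. \<Sum>i\<in>F. a i * f i u)"
  have ee: "cinner V e e = 1" unfolding cinner_def e_def using fin v by (simp add: if_distrib cong: if_cong)
  have es: "cinner V e s = (\<Sum>i\<in>F. a i * cnj (a i))"
    unfolding s_def cinner_sum_right a_def by (metis cinner_commute)
  have se: "cinner V s e = (\<Sum>i\<in>F. cnj (a i) * a i)"
    unfolding s_def cinner_sum_left a_def ..
  have ss: "cinner V s s = (\<Sum>i\<in>F. cnj (a i) * a i)"
    unfolding s_def by (rule cinner_orthonormal[OF finF on])
  have "0 \<le> nrm V (\<lambda>u. e u - s u)" by (rule nrm_nonneg)
  also have "nrm V (\<lambda>u. e u - s u) = Re (cinner V e e - cinner V e s - (cinner V s e - cinner V s s))"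
    unfolding nrm_eq_Re cinner_diff_left cinner_diff_right ..
  also have "\<dots> = 1 - Re (\<Sum>i\<in>F. a i * cnj (a i))"
    unfolding ee es se ss by (simp add: mult.commute)
  also have "Re (\<Sum>i\<in>F. a i * cnj (a i)) = (\<Sum>i\<in>F. (cmod (f i v))\<^sup>2)"
    unfolding a_eq Re_sum complex_cnj_cnj by (simp only: Re_cnj_mult)
  finally show ?thesis by simp
qed

lemma eig_finite:
  assumes fin: "finite V" and sym: "symm V M"
  shows "finite {x::real. x \<noteq> 0 \<and> is_eigenvalue V M (complex_of_real x)}"
proof -
  let ?E = "{x::real. is_eigenvalue V M (complex_of_real x)}"
  have bound: "card F \<le> card V" if F: "F \<subseteq> ?E" "finite F" for F
  proof -
    have "\<forall>a\<in>F. \<exists>x. in_eigenspace V M (complex_of_real a) x \<and> nrm V x = 1"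
    proof
      fix a assume "a \<in> F"
      then obtain x v where x: "in_eigenspace V M (complex_of_real a) x" "v \<in> V" "x v \<noteq> 0"
        using F unfolding is_eigenvalue_def by blast
      have "nrm V x \<noteq> 0" using x nrm_zero_iff[OF fin, of x] by blast
      moreover have "in_eigenspace V M (complex_of_real a) (\<lambda>v. complex_of_real (1 / sqrt (nrm V x)) * x v)"
        by (rule eig_scale[OF x(1)])
      ultimately show "\<exists>x. in_eigenspace V M (complex_of_real a) x \<and> nrm V x = 1"
        using normalize by blast
    qed
    then obtain ev where ev: "\<And>a. a \<in> F \<Longrightarrow> in_eigenspace V M (complex_of_real a) (ev a) \<and> nrm V (ev a) = 1"
      by metis
    have on: "\<forall>i\<in>F. \<forall>j\<in>F. cinner V (ev i) (ev j) = (if i = j then 1 else 0)"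
    proof (intro ballI)
      fix i j assume i: "i \<in> F" and j: "j \<in> F"
      show "cinner V (ev i) (ev j) = (if i = j then 1 else 0)"
      proof (cases "i = j")
        case True thus ?thesis using ev[OF i] by (simp add: cinner_self)
      next
        case False thus ?thesis
          using eig_orth[OF sym conjunct1[OF ev[OF i]] conjunct1[OF ev[OF j]]] by simp
      qed
    qed
    have "(\<Sum>i\<in>F. nrm V (ev i)) = (\<Sum>i\<in>F. 1)" using ev by (intro sum.cong) auto
    hence "real (card F) = (\<Sum>i\<in>F. nrm V (ev i))" by simp
    also have "\<dots> = (\<Sum>v\<in>V. \<Sum>i\<in>F. (cmod (ev i v))\<^sup>2)"
      unfolding nrm_def by (rule sum.swap)
    also have "\<dots> \<le> (\<Sum>v\<in>V. 1)"
      by (intro sum_mono bessel[OF fin F(2) _ on])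
    also have "\<dots> = real (card V)" by simp
    finally show ?thesis by simp
  qed
  have "finite ?E"
  proof (rule ccontr)
    assume "infinite ?E"
    then obtain F where F: "finite F" "card F = Suc (card V)" "F \<subseteq> ?E"
      using infinite_arbitrarily_large by blast
    from bound[OF F(3) F(1)] F(2) show False by simp
  qed
  thus ?thesis by (rule rev_finite_subset) auto
qed

lemma psd_kernel:
  assumes fin: "finite V" and sym: "symm V M"
    and psd: "\<And>x. supp V x \<Longrightarrow> qf V M x \<ge> 0"
    and y: "supp V y" and q0: "qf V M y = 0"
  shows "mv V M y = (\<lambda>v. 0)"
proof -
  have suppadd: "supp V (\<lambda>v. a v + c * b v)" if "supp V a" "supp V b" for a b c
    using that unfolding supp_def by auto
  have ReZ: "Re (cinner V z (mv V M y)) = 0" if z: "supp V z" for z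
  proof -
    have "\<forall>t. 2 * t * Re (cinner V z (mv V M y)) + t\<^sup>2 * qf V M z \<ge> 0"
    proof
      fix t :: real
      from psd[OF suppadd[OF y z, of "complex_of_real t"]]
      show "2 * t * Re (cinner V z (mv V M y)) + t\<^sup>2 * qf V M z \<ge> 0"
        unfolding qf_add[OF sym] q0 by simp
    qed
    from quad_zero[OF this] show ?thesis .
  qed
  have Z: "cinner V z (mv V M y) = 0" if z: "supp V z" for z
  proof (rule complex_zero_ReIm)
    show "Re (cinner V z (mv V M y)) = 0" by (rule ReZ[OF z])
    have "supp V (\<lambda>v. \<i> * z v)" using z unfolding supp_def by auto
    from ReZ[OF this] show "Im (cinner V z (mv V M y)) = 0" unfolding cinner_ii by simp
  qed
  have "cinner V (mv V M y) (mv V M y) = 0" by (rule Z[OF supp_mv])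
  hence "nrm V (mv V M y) = 0" unfolding cinner_self by simp
  hence "\<forall>v\<in>V. mv V M y v = 0" using nrm_zero_iff[OF fin] by blast
  thus ?thesis by (auto simp: mv_def)
qed

lemma eig_bound:
  assumes fin: "finite V" and x: "in_eigenspace V M (complex_of_real \<mu>) x"
    and nz: "v0 \<in> V" "x v0 \<noteq> 0"
    and rows: "\<And>u. u \<in> V \<Longrightarrow> (\<Sum>w\<in>V. \<bar>M u w\<bar>) \<le> Bd"
  shows "\<bar>\<mu>\<bar> \<le> Bd"
proof -
  obtain u where u: "u \<in> V" and umax: "\<forall>w\<in>V. cmod (x w) \<le> cmod (x u)"
    using finite_argmax[OF fin, of "\<lambda>w. cmod (x w)"] nz by blast
  have "cmod (x v0) > 0" using nz by simp
  hence pos: "cmod (x u) > 0" using umax nz(1) less_le_trans by blast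
  have "\<bar>\<mu>\<bar> * cmod (x u) = cmod (\<Sum>w\<in>V. complex_of_real (M u w) * x w)"
    using x u unfolding in_eigenspace_def by (simp add: norm_mult)
  also have "\<dots> \<le> (\<Sum>w\<in>V. \<bar>M u w\<bar> * cmod (x w))"
    by (rule order.trans[OF norm_sum]) (simp add: norm_mult)
  also have "\<dots> \<le> (\<Sum>w\<in>V. \<bar>M u w\<bar> * cmod (x u))"
    using umax by (intro sum_mono mult_left_mono) auto
  also have "\<dots> = (\<Sum>w\<in>V. \<bar>M u w\<bar>) * cmod (x u)" by (simp add: sum_distrib_right)
  also have "\<dots> \<le> Bd * cmod (x u)" using rows[OF u] pos by (simp add: mult_right_mono)
  finally show ?thesis using pos by simp
qed


lemma mv_shift: "finite V \<Longrightarrow> supp V x \<Longrightarrow> mv V (shift M c) x = (\<lambda>u. mv V M x u - complex_of_real c * x u)"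
proof -
  assume fin: "finite V" and s: "supp V x"
  show ?thesis
  proof
    fix u show "mv V (shift M c) x u = mv V M x u - complex_of_real c * x u"
    proof (cases "u \<in> V")
      case True
      have "(\<Sum>w\<in>V. complex_of_real (shift M c u w) * x w)
          = (\<Sum>w\<in>V. complex_of_real (M u w) * x w - (if w = u then complex_of_real c * x w else 0))"
        unfolding shift_def by (intro sum.cong refl) (auto simp: algebra_simps)
      also have "\<dots> = (\<Sum>w\<in>V. complex_of_real (M u w) * x w) - complex_of_real c * x u"
        using True fin by (simp add: sum_subtractf)
      finally show ?thesis using True by (simp add: mv_def)
    next
      case False thus ?thesis using s by (simp add: mv_def supp_def)
    qed
  qed
qed

lemma shift_sum:
  assumes "finite V" "u \<in> V"
  shows "(\<Sum>w\<in>V. complex_of_real (shift M c u w) * x w)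
          = (\<Sum>w\<in>V. complex_of_real (M u w) * x w) - complex_of_real c * x u"
proof -
  have "(\<Sum>w\<in>V. complex_of_real (shift M c u w) * x w)
        = (\<Sum>w\<in>V. complex_of_real (M u w) * x w - (if w = u then complex_of_real c * x w else 0))"
    unfolding shift_def by (intro sum.cong refl) (auto simp: algebra_simps)
  also have "\<dots> = (\<Sum>w\<in>V. complex_of_real (M u w) * x w) - complex_of_real c * x u"
    using assms by (simp add: sum_subtractf)
  finally show ?thesis .
qed

lemma eig_shift:
  assumes fin: "finite V"
  shows "in_eigenspace V (shift M c) \<mu> x \<longleftrightarrow> in_eigenspace V M (\<mu> + complex_of_real c) x"
proof -
  have "(\<Sum>w\<in>V. complex_of_real (shift M c u w) * x w) = \<mu> * x u
     \<longleftrightarrow> (\<Sum>w\<in>V. complex_of_real (M u w) * x w) = (\<mu> + complex_of_real c) * x u" if "u \<in> V" for u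
    unfolding shift_sum[OF fin that] by (auto simp: algebra_simps)
  thus ?thesis unfolding in_eigenspace_def by auto
qed

lemma isev_shift: "finite V \<Longrightarrow> is_eigenvalue V (shift M c) \<mu> \<longleftrightarrow> is_eigenvalue V M (\<mu> + complex_of_real c)"
  unfolding is_eigenvalue_def by (simp add: eig_shift)

lemma qf_shift: "finite V \<Longrightarrow> supp V x \<Longrightarrow> qf V (shift M c) x = qf V M x - c * nrm V x"
  unfolding qf_def by (simp add: mv_shift cinner_diff_right cinner_scale_right nrm_eq_Re)

lemma symm_shift: "symm V M \<Longrightarrow> symm V (shift M c)"
  unfolding symm_def shift_def by auto

lemma suppW: 
  shows "\<And>x y. x \<in> {x. supp V x} \<Longrightarrow> y \<in> {x. supp V x} \<Longrightarrow> (\<lambda>v. x v + y v) \<in> {x. supp V x}"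
    and "\<And>x c. x \<in> {x. supp V x} \<Longrightarrow> (\<lambda>v. c * x v) \<in> {x. supp V x}"
  unfolding supp_def by auto

lemma smallest_psd:
  assumes fin: "finite V" and sym: "symm V M" and sm: "smallest_eigenvalue V M e"
  shows "\<And>x. supp V x \<Longrightarrow> qf V M x \<ge> e * nrm V x"
proof -
  obtain x0 v0 where x0: "in_eigenspace V M (complex_of_real e) x0" "v0 \<in> V" "x0 v0 \<noteq> 0"
    using sm unfolding smallest_eigenvalue_def is_eigenvalue_def by blast
  have s0: "supp V x0" using eig_mv(2)[OF x0(1)] .
  have n0: "nrm V x0 \<noteq> 0" using x0 nrm_zero_iff[OF fin, of x0] by blast
  obtain y where y: "supp V y" "nrm V y = 1"
    and ey: "mv V M y = (\<lambda>v. complex_of_real (qf V M y) * y v)"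
    and lb: "\<forall>x\<in>{x. supp V x}. qf V M x \<ge> qf V M y * nrm V x"
    using rayleigh_min[OF fin sym, of "{x. supp V x}" x0, OF _ suppW closed_supp _ _ n0] supp_mv s0 by auto
  have "in_eigenspace V M (complex_of_real (qf V M y)) y"
    using ey y(1) unfolding in_eigenspace_def mv_def supp_def by (metis (no_types, lifting))
  moreover have "\<exists>v\<in>V. y v \<noteq> 0" using y(2) nrm_zero_iff[OF fin, of y] by auto
  ultimately have "is_eigenvalue V M (complex_of_real (qf V M y))" unfolding is_eigenvalue_def by blast
  hence "e \<le> qf V M y" using sm unfolding smallest_eigenvalue_def by force
  fix x assume "supp V x"
  hence "qf V M x \<ge> qf V M y * nrm V x" using lb by auto
  moreover have "qf V M y * nrm V x \<ge> e * nrm V x"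
    using \<open>e \<le> qf V M y\<close> nrm_nonneg[of V x] by (rule mult_right_mono)
  ultimately show "qf V M x \<ge> e * nrm V x" by linarith
qed

lemma mv_addM: "mv V (\<lambda>u w. M1 u w + M2 u w) x = (\<lambda>u. mv V M1 x u + mv V M2 x u)"
  unfolding mv_def by (auto simp: distrib_right sum.distrib)

lemma qf_addM: "qf V (\<lambda>u w. M1 u w + M2 u w) x = qf V M1 x + qf V M2 x"
  unfolding qf_def mv_addM cinner_add_right by simp

lemma qf_gram_nonneg:
  assumes finI: "finite I" and M: "\<forall>u\<in>V. \<forall>w\<in>V. M u w = (\<Sum>i\<in>I. g i u * g i w)"
  shows "qf V M x \<ge> 0"
proof -
  define s where "s i = (\<Sum>w\<in>V. complex_of_real (g i w) * x w)" for i
  have "cinner V x (mv V M x) = (\<Sum>u\<in>V. cnj (x u) * (\<Sum>w\<in>V. complex_of_real (M u w) * x w))"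
    unfolding cinner_def mv_def by simp
  also have "\<dots> = (\<Sum>u\<in>V. \<Sum>w\<in>V. \<Sum>i\<in>I. cnj (x u) * complex_of_real (g i u) * (complex_of_real (g i w) * x w))"
    using M by (auto simp: sum_distrib_left sum_distrib_right mult.assoc intro!: sum.cong)
  also have "\<dots> = (\<Sum>i\<in>I. \<Sum>u\<in>V. \<Sum>w\<in>V. cnj (x u) * complex_of_real (g i u) * (complex_of_real (g i w) * x w))"
  proof -
    have "(\<Sum>u\<in>V. \<Sum>w\<in>V. \<Sum>i\<in>I. cnj (x u) * complex_of_real (g i u) * (complex_of_real (g i w) * x w))
        = (\<Sum>u\<in>V. \<Sum>i\<in>I. \<Sum>w\<in>V. cnj (x u) * complex_of_real (g i u) * (complex_of_real (g i w) * x w))"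
      by (intro sum.cong refl) (rule sum.swap)
    also have "\<dots> = (\<Sum>i\<in>I. \<Sum>u\<in>V. \<Sum>w\<in>V. cnj (x u) * complex_of_real (g i u) * (complex_of_real (g i w) * x w))"
      by (rule sum.swap)
    finally show ?thesis .
  qed
  also have "\<dots> = (\<Sum>i\<in>I. cnj (s i) * s i)"
    unfolding s_def cnj_sum sum_product by (simp add: mult_ac)
  finally have "qf V M x = (\<Sum>i\<in>I. Re (cnj (s i) * s i))" unfolding qf_def by (simp add: Re_sum)
  also have "\<dots> \<ge> 0" by (intro sum_nonneg) (simp add: Re_cnj_mult)
  finally show ?thesis .
qed


type_synonym vtx = "nat \<times> nat \<times> nat \<times> nat"

definition node :: "vtx \<Rightarrow> nat \<times> nat \<times> nat" where
  "node u = (fst u, fst (snd u), fst (snd (snd u)))"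
definition jj :: "vtx \<Rightarrow> nat" where "jj u = snd (snd (snd u))"

definition MA :: "(nat \<times> nat \<times> nat \<Rightarrow> nat \<times> nat \<times> nat \<Rightarrow> real) \<Rightarrow> vtx \<Rightarrow> vtx \<Rightarrow> real" where
  "MA A0 = (\<lambda>u w. if fst u = fst w then A0 (snd u) (snd w) else 0)"
definition MS :: "(nat \<times> nat \<times> nat) set \<Rightarrow> vtx \<Rightarrow> vtx \<Rightarrow> real" where
  "MS S = (\<lambda>u w. if u = w \<and> node u \<in> S then 1 else 0)"
definition ME :: "(nat \<times> nat \<times> nat) set set \<Rightarrow> vtx \<Rightarrow> vtx \<Rightarrow> real" where
  "ME E = (\<lambda>u w. if jj u = jj w \<and> (\<exists>p\<in>E. node u \<in> p \<and> node w \<in> p) then 1 else 0)"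

lemma AG_split: "AG A0 S E = (\<lambda>u w. (MA A0 u w + MS S u w) + ME E u w)"
proof (intro ext)
  fix u w :: vtx
  obtain q z t j where u: "u = (q,z,t,j)" by (cases u) auto
  obtain q' z' t' j' where w: "w = (q',z',t',j')" by (cases w) auto
  show "AG A0 S E u w = (MA A0 u w + MS S u w) + ME E u w"
    unfolding u w AG_def MA_def MS_def ME_def node_def jj_def by simp
qed

lemma VG_eq: "VG R = {1..R} \<times> V0"
  unfolding VG_def V0_def by auto

lemma finite_V0: "finite V0"
proof -
  have "V0 \<subseteq> {..<2} \<times> {1..8} \<times> {..<8}" unfolding V0_def by auto
  thus ?thesis by (rule finite_subset) auto
qed

lemma finite_VG: "finite (VG R)"
  unfolding VG_eq using finite_V0 by simp

definition blk :: "nat \<Rightarrow> (vtx \<Rightarrow> complex) \<Rightarrow> nat \<times> nat \<times> nat \<Rightarrow> complex" where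
  "blk q x = (\<lambda>w. if w \<in> V0 then x (q, w) else 0)"

lemma supp_blk: "supp V0 (blk q x)"
  unfolding supp_def blk_def by auto

lemma sum_prod_split: "(\<Sum>w\<in>A \<times> B. f w) = (\<Sum>a\<in>A. \<Sum>b\<in>B. f (a, b))"
  by (simp add: sum.cartesian_product)

lemma MA_inner:
  assumes q: "q \<in> {1..R}"
  shows "(\<Sum>w\<in>VG R. complex_of_real (MA A0 (q, a) w) * x w)
       = (\<Sum>b\<in>V0. complex_of_real (A0 a b) * x (q, b))"
proof -
  have "(\<Sum>w\<in>VG R. complex_of_real (MA A0 (q, a) w) * x w)
      = (\<Sum>q'\<in>{1..R}. \<Sum>b\<in>V0. complex_of_real (MA A0 (q, a) (q', b)) * x (q', b))"
    unfolding VG_eq sum_prod_split ..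
  also have "\<dots> = (\<Sum>q'\<in>{1..R}. if q = q' then (\<Sum>b\<in>V0. complex_of_real (A0 a b) * x (q', b)) else 0)"
    unfolding MA_def by (intro sum.cong refl) auto
  also have "\<dots> = (\<Sum>b\<in>V0. complex_of_real (A0 a b) * x (q, b))"
    using q by simp
  finally show ?thesis .
qed

lemma qf_MA: "qf (VG R) (MA A0) x = (\<Sum>q\<in>{1..R}. qf V0 A0 (blk q x))"
proof -
  have "qf (VG R) (MA A0) x
     = Re (\<Sum>q\<in>{1..R}. \<Sum>a\<in>V0. cnj (x (q, a)) * (\<Sum>w\<in>VG R. complex_of_real (MA A0 (q, a) w) * x w))"
    unfolding qf_expr by (simp only: VG_eq sum_prod_split)
  also have "\<dots> = Re (\<Sum>q\<in>{1..R}. \<Sum>a\<in>V0. cnj (blk q x a) * (\<Sum>b\<in>V0. complex_of_real (A0 a b) * blk q x b))"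
    by (intro arg_cong[where f=Re] sum.cong refl) (simp add: MA_inner blk_def)
  also have "\<dots> = (\<Sum>q\<in>{1..R}. qf V0 A0 (blk q x))"
    unfolding qf_expr Re_sum ..
  finally show ?thesis .
qed

lemma nrm_VG: "nrm (VG R) x = (\<Sum>q\<in>{1..R}. nrm V0 (blk q x))"
  unfolding nrm_def VG_eq sum_prod_split by (intro sum.cong refl) (simp add: blk_def)

lemma sum_unique_ind:
  assumes "finite E" "\<forall>p\<in>E. \<forall>p'\<in>E. P p \<longrightarrow> P p' \<longrightarrow> p = p'"
  shows "(\<Sum>p\<in>E. if P p then (1::real) else 0) = (if \<exists>p\<in>E. P p then 1 else 0)"
proof (cases "\<exists>p\<in>E. P p")
  case True
  then obtain p0 where p0: "p0 \<in> E" "P p0" by blast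
  have "(\<Sum>p\<in>E. if P p then (1::real) else 0) = (\<Sum>p\<in>E. if p = p0 then 1 else 0)"
    using assms(2) p0 by (intro sum.cong refl) auto
  also have "\<dots> = 1" using assms(1) p0 by simp
  finally show ?thesis using True by simp
next
  case False thus ?thesis by simp
qed

lemma diagram_nodes_finite: "finite (diagram_nodes R U)"
proof -
  have "diagram_nodes R U \<subseteq> {1..R} \<times> {..<2} \<times> {..8}"
  proof
    fix n assume "n \<in> diagram_nodes R U"
    then obtain q z t where n: "n = (q, z, t)" "q \<in> {1..R}" "z < 2" "t \<in> {1,3} \<union> Tset (U q)"
      unfolding diagram_nodes_def by blast
    have "t \<le> 8" using n(4) by (cases "U q") (auto simp: Tset_def)
    thus "n \<in> {1..R} \<times> {..<2} \<times> {..8}" using n by auto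
  qed
  thus ?thesis by (rule finite_subset) auto
qed

lemma gd_finite_E: "gate_diagram R U S E \<Longrightarrow> finite E"
proof -
  assume gd: "gate_diagram R U S E"
  have h: "\<forall>p\<in>E. \<exists>a b. a \<noteq> b \<and> p = {a, b} \<and> a \<in> diagram_nodes R U \<and> b \<in> diagram_nodes R U"
    using gd unfolding gate_diagram_def by (elim conjE)
  have "E \<subseteq> Pow (diagram_nodes R U)"
  proof
    fix p assume "p \<in> E"
    then obtain a b where "p = {a, b}" "a \<in> diagram_nodes R U" "b \<in> diagram_nodes R U" using h by blast
    thus "p \<in> Pow (diagram_nodes R U)" by auto
  qed
  thus ?thesis using diagram_nodes_finite by (metis finite_Pow_iff finite_subset)
qed

lemma gd_unique: "gate_diagram R U S E \<Longrightarrow> p \<in> E \<Longrightarrow> p' \<in> E \<Longrightarrow> a \<in> p \<Longrightarrow> a \<in> p' \<Longrightarrow> p = p'"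
proof -
  assume gd: "gate_diagram R U S E" and h: "p \<in> E" "p' \<in> E" "a \<in> p" "a \<in> p'"
  have d: "\<forall>p\<in>E. \<forall>p'\<in>E. p \<noteq> p' \<longrightarrow> p \<inter> p' = {}" using gd unfolding gate_diagram_def by (elim conjE)
  show "p = p'"
  proof (rule ccontr)
    assume "p \<noteq> p'"
    hence "p \<inter> p' = {}" using d h(1,2) by blast
    thus False using h(3,4) by blast
  qed
qed

lemma qf_ME_nonneg:
  assumes gd: "gate_diagram R U S E"
  shows "qf (VG R) (ME E) x \<ge> 0"
proof (rule qf_gram_nonneg)
  let ?g = "\<lambda>(p, j0) u. if node u \<in> p \<and> jj u = j0 then (1::real) else 0"
  show "finite (E \<times> {..<8::nat})" using gd_finite_E[OF gd] by simp
  show "\<forall>u\<in>VG R. \<forall>w\<in>VG R. ME E u w = (\<Sum>i\<in>E \<times> {..<8}. ?g i u * ?g i w)"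
  proof (intro ballI)
    fix u w assume u: "u \<in> VG R" and w: "w \<in> VG R"
    have ju: "jj u < 8" using u unfolding VG_def jj_def by auto
    have "(\<Sum>i\<in>E \<times> {..<8}. ?g i u * ?g i w)
        = (\<Sum>p\<in>E. \<Sum>j0\<in>{..<8::nat}. if (node u \<in> p \<and> node w \<in> p) \<and> (j0 = jj u \<and> j0 = jj w) then 1 else 0)"
      unfolding sum_prod_split by (intro sum.cong refl) auto
    also have "\<dots> = (\<Sum>p\<in>E. if node u \<in> p \<and> node w \<in> p then (if jj u = jj w then 1 else 0) else 0)"
    proof (intro sum.cong refl)
      fix p
      show "(\<Sum>j0\<in>{..<8::nat}. if (node u \<in> p \<and> node w \<in> p) \<and> (j0 = jj u \<and> j0 = jj w) then (1::real) else 0)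
          = (if node u \<in> p \<and> node w \<in> p then (if jj u = jj w then 1 else 0) else 0)"
      proof (cases "node u \<in> p \<and> node w \<in> p \<and> jj u = jj w")
        case True
        hence "(\<Sum>j0\<in>{..<8::nat}. if (node u \<in> p \<and> node w \<in> p) \<and> (j0 = jj u \<and> j0 = jj w) then (1::real) else 0)
             = (\<Sum>j0\<in>{..<8::nat}. if j0 = jj u then 1 else 0)" by (intro sum.cong refl) auto
        also have "\<dots> = 1" using ju by simp
        finally show ?thesis using True by simp
      next
        case False thus ?thesis by (auto intro!: sum.neutral)
      qed
    qed
    also have "\<dots> = (if jj u = jj w then (\<Sum>p\<in>E. if node u \<in> p \<and> node w \<in> p then 1 else 0) else 0)"
      by (cases "jj u = jj w") simp_all
    also have "\<dots> = ME E u w"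
    proof -
      have "\<forall>p\<in>E. \<forall>p'\<in>E. node u \<in> p \<and> node w \<in> p \<longrightarrow> node u \<in> p' \<and> node w \<in> p' \<longrightarrow> p = p'"
        using gd_unique[OF gd] by blast
      from sum_unique_ind[OF gd_finite_E[OF gd] this]
      show ?thesis unfolding ME_def by simp
    qed
    finally show "ME E u w = (\<Sum>i\<in>E \<times> {..<8}. ?g i u * ?g i w)" by simp
  qed
qed

lemma qf_MS_nonneg: "qf (VG R) (MS S) x \<ge> 0"
proof (rule qf_gram_nonneg)
  let ?g = "\<lambda>i u. if u = i \<and> node i \<in> S then (1::real) else 0"
  show "finite (VG R)" by (rule finite_VG)
  show "\<forall>u\<in>VG R. \<forall>w\<in>VG R. MS S u w = (\<Sum>i\<in>VG R. ?g i u * ?g i w)"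
  proof (intro ballI)
    fix u w assume u: "u \<in> VG R" and w: "w \<in> VG R"
    have "(\<Sum>i\<in>VG R. ?g i u * ?g i w) = (\<Sum>i\<in>VG R. if i = u then (if u = w \<and> node u \<in> S then 1 else 0) else 0)"
      by (intro sum.cong refl) auto
    also have "\<dots> = MS S u w" using u finite_VG unfolding MS_def by simp
    finally show "MS S u w = (\<Sum>i\<in>VG R. ?g i u * ?g i w)" by simp
  qed
qed


abbreviation Bl :: "(nat \<times> nat \<times> nat \<Rightarrow> complex) list" where
  "Bl \<equiv> [psi0 0, psi0 1, psi1 0, psi1 1]"

lemma g0_facts:
  assumes "g0_spec A0"
  shows "symm V0 A0" "\<And>u w. u \<in> V0 \<Longrightarrow> w \<in> V0 \<Longrightarrow> A0 u w \<in> {0,1}"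
    "\<And>u. u \<in> V0 \<Longrightarrow> A0 u u = 0" "smallest_eigenvalue V0 A0 e1"
    "\<forall>i<4. \<forall>k<4. cinner V0 (Bl ! i) (Bl ! k) = (if i = k then 1 else 0)"
    "\<And>x. in_eigenspace V0 A0 (complex_of_real e1) x \<Longrightarrow> \<exists>c. x = (\<lambda>v. \<Sum>i<4. c i * (Bl ! i) v)"
  using assms unfolding g0_spec_def simple_graph_adj_def symm_def Let_def by auto

lemma symm_AG:
  assumes "g0_spec A0"
  shows "symm (VG R) (AG A0 S E)"
proof -
  have s: "symm V0 A0" by (rule g0_facts(1)[OF assms])
  show ?thesis unfolding symm_def AG_split
  proof (intro ballI)
    fix u w assume u: "u \<in> VG R" and w: "w \<in> VG R"
    have "snd u \<in> V0" "snd w \<in> V0" using u w unfolding VG_eq by auto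
    hence "MA A0 u w = MA A0 w u" using s unfolding MA_def symm_def by auto
    moreover have "MS S u w = MS S w u" unfolding MS_def by auto
    moreover have "ME E u w = ME E w u" unfolding ME_def by auto
    ultimately show "MA A0 u w + MS S u w + ME E u w = MA A0 w u + MS S w u + ME E w u" by simp
  qed
qed

lemma mv_zero_eig: "supp V x \<Longrightarrow> mv V M x = (\<lambda>v. 0) \<Longrightarrow> in_eigenspace V M 0 x"
  unfolding in_eigenspace_def supp_def mv_def by (metis mult_zero_left)

lemma psd_A0:
  assumes g0: "g0_spec A0"
  shows "\<And>x. supp V0 x \<Longrightarrow> qf V0 (shift A0 e1) x \<ge> 0"
proof -
  fix x assume x: "supp V0 x"
  have "qf V0 A0 x \<ge> e1 * nrm V0 x"
    by (rule smallest_psd[OF finite_V0 g0_facts(1)[OF g0] g0_facts(4)[OF g0] x])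
  thus "qf V0 (shift A0 e1) x \<ge> 0" using qf_shift[OF finite_V0 x] by simp
qed

lemma qf_H_split:
  assumes "supp (VG R) k"
  shows "qf (VG R) (shift (AG A0 S E) e1) k
       = (\<Sum>q\<in>{1..R}. qf V0 (shift A0 e1) (blk q k)) + qf (VG R) (MS S) k + qf (VG R) (ME E) k"
proof -
  have "qf (VG R) (shift (AG A0 S E) e1) k = qf (VG R) (AG A0 S E) k - e1 * nrm (VG R) k"
    by (rule qf_shift[OF finite_VG assms])
  also have "qf (VG R) (AG A0 S E) k = qf (VG R) (MA A0) k + qf (VG R) (MS S) k + qf (VG R) (ME E) k"
    unfolding AG_split qf_addM ..
  also have "(\<Sum>q\<in>{1..R}. qf V0 (shift A0 e1) (blk q k))
      = (\<Sum>q\<in>{1..R}. qf V0 A0 (blk q k) - e1 * nrm V0 (blk q k))"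
    by (intro sum.cong refl qf_shift[OF finite_V0 supp_blk])
  ultimately show ?thesis
    unfolding qf_MA nrm_VG sum_subtractf sum_distrib_left by simp
qed

lemma kernel_blocks:
  assumes g0: "g0_spec A0" and gd: "gate_diagram R U S E"
    and k: "supp (VG R) k" "mv (VG R) (shift (AG A0 S E) e1) k = (\<lambda>v. 0)" and q: "q \<in> {1..R}"
  shows "in_eigenspace V0 A0 (complex_of_real e1) (blk q k)"
proof -
  have "qf (VG R) (shift (AG A0 S E) e1) k = 0"
    unfolding qf_def k(2) by (simp add: cinner_zero_right)
  hence sum0: "(\<Sum>q\<in>{1..R}. qf V0 (shift A0 e1) (blk q k)) + qf (VG R) (MS S) k + qf (VG R) (ME E) k = 0"
    unfolding qf_H_split[OF k(1)] .
  have nn: "\<forall>q\<in>{1..R}. qf V0 (shift A0 e1) (blk q k) \<ge> 0" using psd_A0[OF g0 supp_blk] by blast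
  have "(\<Sum>q\<in>{1..R}. qf V0 (shift A0 e1) (blk q k)) \<ge> 0" proof (rule sum_nonneg) fix q assume "q \<in> {1..R}" thus "qf V0 (shift A0 e1) (blk q k) \<ge> 0" using nn by blast qed
  hence "(\<Sum>q\<in>{1..R}. qf V0 (shift A0 e1) (blk q k)) = 0"
    using sum0 qf_MS_nonneg[of R S k] qf_ME_nonneg[OF gd, of k] by linarith
  moreover have nn': "\<And>q. q \<in> {1..R} \<Longrightarrow> 0 \<le> qf V0 (shift A0 e1) (blk q k)" using nn by blast
  ultimately have "\<forall>q\<in>{1..R}. qf V0 (shift A0 e1) (blk q k) = 0"
    using sum_nonneg_eq_0_iff[of "{1..R}" "\<lambda>q. qf V0 (shift A0 e1) (blk q k)", OF finite_atLeastAtMost nn'] by blast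
  hence z: "qf V0 (shift A0 e1) (blk q k) = 0" using q by blast
  have "mv V0 (shift A0 e1) (blk q k) = (\<lambda>v. 0)"
    by (rule psd_kernel[OF finite_V0 symm_shift[OF g0_facts(1)[OF g0]] psd_A0[OF g0] supp_blk z])
  from mv_zero_eig[OF supp_blk this] show ?thesis
    unfolding eig_shift[OF finite_V0] by simp
qed


definition Wv :: "nat \<Rightarrow> complex" where "Wv j = cis (- pi * real j / 4) / 8"

lemma sqrt8_sq: "complex_of_real (sqrt 8) * complex_of_real (sqrt 8) = 8"
  unfolding of_real_mult[symmetric] by simp

lemma omega_W: "omega j / complex_of_real (sqrt 8) = Wv j"
  unfolding omega_def Wv_def using sqrt8_sq by (simp add: divide_divide_eq_left)

lemma cis_cnj_mult: "cnj (cis a) * cis a = 1"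
  unfolding cis_cnj cis_mult by simp

lemma W_norm: "cnj (Wv j) * Wv j = 1 / 64"
  unfolding Wv_def using cis_cnj_mult[of "- pi * real j / 4"] by simp

lemma W_sq: "Wv j * Wv j = (- \<i>) ^ j / 64"
proof -
  have "cis (- pi * real j / 4) * cis (- pi * real j / 4) = cis (- pi * real j / 4 + - pi * real j / 4)"
    by (rule cis_mult)
  also have "\<dots> = cis (real j * (- pi / 2))"
    by (rule arg_cong[where f=cis]) (simp add: field_simps)
  also have "\<dots> = cis (- pi / 2) ^ j" by (rule Complex.DeMoivre[symmetric])
  also have "cis (- pi / 2) = - \<i>" by (simp add: cis.ctr complex_eq_iff)
  finally have c: "cis (- pi * real j / 4) * cis (- pi * real j / 4) = (- \<i>) ^ j" .
  have "Wv j * Wv j = (cis (- pi * real j / 4) * cis (- pi * real j / 4)) / 64"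
    unfolding Wv_def by simp
  thus ?thesis unfolding c .
qed

lemma W_sq_sum: "(\<Sum>j<(8::nat). Wv j * Wv j) = 0"
proof -
  have "(\<Sum>j<(8::nat). Wv j * Wv j) = (\<Sum>j<(8::nat). (- \<i>) ^ j) / 64"
    unfolding W_sq by (simp add: sum_divide_distrib)
  also have "(\<Sum>j<(8::nat). (- \<i>) ^ j) = (0::complex)" by (simp add: eval_nat_numeral)
  finally show ?thesis by simp
qed

lemma W_cnj_sq_sum: "(\<Sum>j<(8::nat). cnj (Wv j) * cnj (Wv j)) = 0"
proof -
  have "(\<Sum>j<(8::nat). cnj (Wv j) * cnj (Wv j)) = cnj (\<Sum>j<(8::nat). Wv j * Wv j)"
    by (simp add: cnj_sum)
  thus ?thesis using W_sq_sum by simp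
qed

lemma W_norm_sum: "(\<Sum>j<(8::nat). cnj (Wv j) * Wv j) = 1 / 8"
  unfolding W_norm by simp

lemma mass_W:
  "(\<Sum>j<(8::nat). (cmod (\<alpha> * Wv j + \<beta> * cnj (Wv j)))\<^sup>2) = ((cmod \<alpha>)\<^sup>2 + (cmod \<beta>)\<^sup>2) / 8"
proof -
  have e: "cnj (\<alpha> * Wv j + \<beta> * cnj (Wv j)) * (\<alpha> * Wv j + \<beta> * cnj (Wv j))
      = cnj \<alpha> * \<alpha> * (cnj (Wv j) * Wv j) + cnj \<alpha> * \<beta> * (cnj (Wv j) * cnj (Wv j))
        + cnj \<beta> * \<alpha> * (Wv j * Wv j) + cnj \<beta> * \<beta> * (cnj (Wv j) * Wv j)" for j
    by (simp add: algebra_simps)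
  have "(\<Sum>j<(8::nat). (cmod (\<alpha> * Wv j + \<beta> * cnj (Wv j)))\<^sup>2)
      = Re (\<Sum>j<(8::nat). cnj (\<alpha> * Wv j + \<beta> * cnj (Wv j)) * (\<alpha> * Wv j + \<beta> * cnj (Wv j)))"
    unfolding Re_sum Re_cnj_mult ..
  also have "\<dots> = Re (cnj \<alpha> * \<alpha> * (\<Sum>j<(8::nat). cnj (Wv j) * Wv j)
        + cnj \<alpha> * \<beta> * (\<Sum>j<(8::nat). cnj (Wv j) * cnj (Wv j))
        + cnj \<beta> * \<alpha> * (\<Sum>j<(8::nat). Wv j * Wv j) + cnj \<beta> * \<beta> * (\<Sum>j<(8::nat). cnj (Wv j) * Wv j))"
    unfolding e sum.distrib sum_distrib_left ..
  also have "\<dots> = (Re (cnj \<alpha> * \<alpha>) + Re (cnj \<beta> * \<beta>)) / 8"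
    unfolding W_norm_sum W_sq_sum W_cnj_sq_sum by (simp add: field_simps)
  finally show ?thesis unfolding Re_cnj_mult .
qed

lemma psi_vals:
  assumes "z' < 2" "j < 8" "t \<in> {1..8}"
  shows "psi0 z (z', t, j) = coef z t z' * Wv j" "psi1 z (z', t, j) = cnj (coef z t z') * cnj (Wv j)"
  using assms unfolding psi1_def psi0_def V0_def by (simp_all add: omega_W[symmetric] mult.assoc)

definition phi :: "(nat \<Rightarrow> complex) \<Rightarrow> nat \<times> nat \<times> nat \<Rightarrow> complex" where
  "phi c = (\<lambda>v. \<Sum>i<4. c i * (Bl ! i) v)"

lemma phi_expand: "phi c v = c 0 * psi0 0 v + c 1 * psi0 1 v + c 2 * psi1 0 v + c 3 * psi1 1 v"
  unfolding phi_def by (simp add: eval_nat_numeral)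

lemma phi5:
  assumes "j < 8"
  shows "phi c (0, 5, j) = c 0 * Wv j + c 2 * cnj (Wv j)"
        "phi c (1, 5, j) = c 1 * Wv j + c 3 * cnj (Wv j)"
  using assms unfolding phi_expand by (simp_all add: psi_vals coef_def)

lemma Hm_vals: "Hm 0 0 = 1 / complex_of_real (sqrt 2)" "Hm 0 1 = 1 / complex_of_real (sqrt 2)"
  "Hm 1 0 = 1 / complex_of_real (sqrt 2)" "Hm 1 1 = - 1 / complex_of_real (sqrt 2)"
  unfolding Hm_def by simp_all

lemma phi2:
  assumes "j < 8"
  shows "phi c (0, 2, j) = ((c 0 + c 1) / complex_of_real (sqrt 2)) * Wv j + ((c 2 + c 3) / complex_of_real (sqrt 2)) * cnj (Wv j)"
        "phi c (1, 2, j) = ((c 0 - c 1) / complex_of_real (sqrt 2)) * Wv j + ((c 2 - c 3) / complex_of_real (sqrt 2)) * cnj (Wv j)"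
  using assms unfolding phi_expand by (simp_all add: psi_vals coef_def Hm_def field_simps)

lemma parallelogram_c: "(cmod (a + b))\<^sup>2 + (cmod (a - b))\<^sup>2 = 2 * (cmod a)\<^sup>2 + 2 * (cmod b)\<^sup>2"
  unfolding cmod_power2 by (simp add: power2_eq_square algebra_simps)

lemma cmod_div_sqrt2: "(cmod (a / complex_of_real (sqrt 2)))\<^sup>2 = (cmod a)\<^sup>2 / 2"
  by (simp add: norm_divide power_divide)

lemma sum4: "(\<Sum>i<(4::nat). f i) = f 0 + f 1 + f 2 + (f 3 :: real)"
  by (simp add: eval_nat_numeral)

lemma sum2: "(\<Sum>i<(2::nat). f i) = f 0 + (f 1 :: real)"
  by (simp add: eval_nat_numeral)

lemma arith4:
  fixes A B C D x y z w :: real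
  assumes "A + B = 2 * x + 2 * y" "C + D = 2 * z + 2 * w"
  shows "(A / 2 + C / 2) / 8 + (B / 2 + D / 2) / 8 = (x + y + z + w) / 8"
proof -
  have "(A / 2 + C / 2) / 8 + (B / 2 + D / 2) / 8 = ((A + B) + (C + D)) / 16" by (simp add: field_simps)
  also have "\<dots> = (x + y + z + w) / 8" unfolding assms by (simp add: field_simps)
  finally show ?thesis .
qed

lemma arith2:
  fixes a b c d :: real
  shows "(a + b) / 8 + (c + d) / 8 = (a + c + b + d) / 8"
  by (simp add: field_simps)

lemma phi_z_mass:
  assumes "\<And>j. j < 8 \<Longrightarrow> phi c (z, t, j) = \<alpha> * Wv j + \<beta> * cnj (Wv j)"
  shows "(\<Sum>j<(8::nat). (cmod (phi c (z, t, j)))\<^sup>2) = ((cmod \<alpha>)\<^sup>2 + (cmod \<beta>)\<^sup>2) / 8"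
proof -
  have "(\<Sum>j<(8::nat). (cmod (phi c (z, t, j)))\<^sup>2) = (\<Sum>j<(8::nat). (cmod (\<alpha> * Wv j + \<beta> * cnj (Wv j)))\<^sup>2)"
    by (intro sum.cong refl) (simp add: assms)
  thus ?thesis unfolding mass_W .
qed

lemma phi_mass:
  assumes t: "t = 2 \<or> t = 5"
  shows "(\<Sum>z<(2::nat). \<Sum>j<(8::nat). (cmod (phi c (z, t, j)))\<^sup>2) = (\<Sum>i<(4::nat). (cmod (c i))\<^sup>2) / 8"
  using t
proof
  assume t2: "t = 2"
  have a: "(\<Sum>j<(8::nat). (cmod (phi c (0, t, j)))\<^sup>2)
     = ((cmod ((c 0 + c 1) / complex_of_real (sqrt 2)))\<^sup>2 + (cmod ((c 2 + c 3) / complex_of_real (sqrt 2)))\<^sup>2) / 8"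
    unfolding t2 by (rule phi_z_mass) (rule phi2(1))
  have b: "(\<Sum>j<(8::nat). (cmod (phi c (1, t, j)))\<^sup>2)
     = ((cmod ((c 0 - c 1) / complex_of_real (sqrt 2)))\<^sup>2 + (cmod ((c 2 - c 3) / complex_of_real (sqrt 2)))\<^sup>2) / 8"
    unfolding t2 by (rule phi_z_mass) (rule phi2(2))
  have "(\<Sum>z<(2::nat). \<Sum>j<(8::nat). (cmod (phi c (z, t, j)))\<^sup>2)
      = (\<Sum>j<(8::nat). (cmod (phi c (0, t, j)))\<^sup>2) + (\<Sum>j<(8::nat). (cmod (phi c (1, t, j)))\<^sup>2)"
    by (rule sum2)
  also have "\<dots> = (\<Sum>i<(4::nat). (cmod (c i))\<^sup>2) / 8"
    unfolding a b cmod_div_sqrt2 sum4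
    by (rule arith4[OF parallelogram_c[of "c 0" "c 1"] parallelogram_c[of "c 2" "c 3"]])
  finally show ?thesis .
next
  assume t5: "t = 5"
  have a: "(\<Sum>j<(8::nat). (cmod (phi c (0, t, j)))\<^sup>2) = ((cmod (c 0))\<^sup>2 + (cmod (c 2))\<^sup>2) / 8"
    unfolding t5 by (rule phi_z_mass) (rule phi5(1))
  have b: "(\<Sum>j<(8::nat). (cmod (phi c (1, t, j)))\<^sup>2) = ((cmod (c 1))\<^sup>2 + (cmod (c 3))\<^sup>2) / 8"
    unfolding t5 by (rule phi_z_mass) (rule phi5(2))
  have "(\<Sum>z<(2::nat). \<Sum>j<(8::nat). (cmod (phi c (z, t, j)))\<^sup>2)
      = (\<Sum>j<(8::nat). (cmod (phi c (0, t, j)))\<^sup>2) + (\<Sum>j<(8::nat). (cmod (phi c (1, t, j)))\<^sup>2)"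
    by (rule sum2)
  also have "\<dots> = (\<Sum>i<(4::nat). (cmod (c i))\<^sup>2) / 8"
    unfolding a b sum4 by (rule arith2)
  finally show ?thesis .
qed

lemma phi_nrm:
  assumes g0: "g0_spec A0"
  shows "nrm V0 (phi c) = (\<Sum>i<(4::nat). (cmod (c i))\<^sup>2)"
proof -
  have on: "\<forall>i\<in>{..<4::nat}. \<forall>k\<in>{..<4}. cinner V0 (Bl ! i) (Bl ! k) = (if i = k then 1 else 0)"
    using g0_facts(5)[OF g0] by auto
  have "cinner V0 (phi c) (phi c) = (\<Sum>i<(4::nat). cnj (c i) * c i)"
    unfolding phi_def by (rule cinner_orthonormal[OF _ on]) simp
  hence "nrm V0 (phi c) = Re (\<Sum>i<(4::nat). cnj (c i) * c i)" unfolding nrm_eq_Re by simp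
  also have "\<dots> = (\<Sum>i<(4::nat). (cmod (c i))\<^sup>2)" unfolding Re_sum Re_cnj_mult ..
  finally show ?thesis .
qed


definition tq :: "(nat \<Rightarrow> gate_label) \<Rightarrow> nat \<Rightarrow> nat" where
  "tq U q = (if U q = GId then 2 else 5)"

lemma tq_notnode: "tq U q \<notin> {1,3} \<union> Tset (U q)"
  by (cases "U q") (auto simp: tq_def Tset_def)

lemma tq_vals: "tq U q = 2 \<or> tq U q = 5" "tq U q \<in> {1..8}"
  by (auto simp: tq_def)

lemma gd_S: "gate_diagram R U S E \<Longrightarrow> S \<subseteq> diagram_nodes R U"
  unfolding gate_diagram_def by (elim conjE)

lemma gd_E: "gate_diagram R U S E \<Longrightarrow> p \<in> E \<Longrightarrow> p \<subseteq> diagram_nodes R U"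
proof -
  assume gd: "gate_diagram R U S E" and p: "p \<in> E"
  have h: "\<forall>p\<in>E. \<exists>a b. a \<noteq> b \<and> p = {a, b} \<and> a \<in> diagram_nodes R U \<and> b \<in> diagram_nodes R U"
    using gd unfolding gate_diagram_def by (elim conjE)
  then obtain a b where "p = {a, b}" "a \<in> diagram_nodes R U" "b \<in> diagram_nodes R U" using p by blast
  thus ?thesis by auto
qed

lemma gd_E_card: "gate_diagram R U S E \<Longrightarrow> p \<in> E \<Longrightarrow> card p \<le> 2"
proof -
  assume gd: "gate_diagram R U S E" and p: "p \<in> E"
  have h: "\<forall>p\<in>E. \<exists>a b. a \<noteq> b \<and> p = {a, b} \<and> a \<in> diagram_nodes R U \<and> b \<in> diagram_nodes R U"
    using gd unfolding gate_diagram_def by (elim conjE)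
  then obtain a b where "p = {a, b}" using p by blast
  thus ?thesis by (simp add: card_insert_if)
qed

lemma in_Nset:
  assumes gd: "gate_diagram R U S E" and q: "q \<in> {1..R}" and z: "z < 2" and j: "j < 8"
  shows "(q, z, tq U q, j) \<in> Nset R S E"
proof -
  have nn: "(q, z, tq U q) \<notin> diagram_nodes R U"
    using tq_notnode[of U q] unfolding diagram_nodes_def by auto
  have "(q, z, tq U q) \<notin> S" using nn gd_S[OF gd] by blast
  moreover have "\<forall>p\<in>E. (q, z, tq U q) \<notin> p" using nn gd_E[OF gd] by blast
  moreover have "(q, z, tq U q, j) \<in> VG R" using q z j tq_vals(2)[of U q] unfolding VG_def by auto
  ultimately show ?thesis unfolding Nset_def by blast
qed

definition pn :: "nat \<Rightarrow> (nat \<times> nat \<times> nat) set \<Rightarrow> (nat \<times> nat \<times> nat) set set \<Rightarrow> (vtx \<Rightarrow> complex) \<Rightarrow> real" where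
  "pn R S E x = (\<Sum>v\<in>VG R. if v \<in> Nset R S E then (cmod (x v))\<^sup>2 else 0)"

lemma block_mass:
  assumes g0: "g0_spec A0" and ev: "in_eigenspace V0 A0 (complex_of_real e1) (blk q k)"
    and t: "t = 2 \<or> t = 5"
  shows "(\<Sum>z<(2::nat). \<Sum>j<(8::nat). (cmod (k (q, z, t, j)))\<^sup>2) = nrm V0 (blk q k) / 8"
proof -
  obtain c where c: "blk q k = phi c" using g0_facts(6)[OF g0 ev] unfolding phi_def by blast
  have tin: "t \<in> {1..8}" using t by auto
  have "(\<Sum>z<(2::nat). \<Sum>j<(8::nat). (cmod (k (q, z, t, j)))\<^sup>2)
      = (\<Sum>z<(2::nat). \<Sum>j<(8::nat). (cmod (blk q k (z, t, j)))\<^sup>2)"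
    using tin by (intro sum.cong refl) (auto simp: blk_def V0_def)
  also have "\<dots> = nrm V0 (blk q k) / 8"
    unfolding c phi_mass[OF t] phi_nrm[OF g0] ..
  finally show ?thesis .
qed

lemma kernel_mass:
  assumes g0: "g0_spec A0" and gd: "gate_diagram R U S E"
    and k: "supp (VG R) k" "mv (VG R) (shift (AG A0 S E) e1) k = (\<lambda>v. 0)"
  shows "pn R S E k \<ge> nrm (VG R) k / 8"
proof -
  define D where "D = {1..R} \<times> {..<(2::nat)} \<times> {..<(8::nat)}"
  define f :: "nat \<times> nat \<times> nat \<Rightarrow> vtx" where "f = (\<lambda>(q, z, j). (q, z, tq U q, j))"
  have injf: "inj_on f D" unfolding f_def D_def inj_on_def by auto
  have fD: "f ` D \<subseteq> Nset R S E" unfolding f_def D_def using in_Nset[OF gd] by auto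
  have NV: "Nset R S E \<subseteq> VG R" unfolding Nset_def by auto
  have "nrm (VG R) k / 8 = (\<Sum>q\<in>{1..R}. nrm V0 (blk q k) / 8)"
    unfolding nrm_VG by (simp add: sum_divide_distrib)
  also have "\<dots> = (\<Sum>q\<in>{1..R}. \<Sum>z<(2::nat). \<Sum>j<(8::nat). (cmod (k (q, z, tq U q, j)))\<^sup>2)"
    by (intro sum.cong refl block_mass[OF g0 kernel_blocks[OF g0 gd k] tq_vals(1), symmetric])
  also have "\<dots> = (\<Sum>d\<in>D. (cmod (k (f d)))\<^sup>2)"
    unfolding D_def f_def by (simp add: sum.cartesian_product) (rule sum.cong, auto split: prod.splits)
  also have "\<dots> = (\<Sum>v\<in>f ` D. (cmod (k v))\<^sup>2)"
    by (rule sum.reindex[OF injf, symmetric, unfolded comp_def])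
  also have "\<dots> = (\<Sum>v\<in>f ` D. if v \<in> Nset R S E then (cmod (k v))\<^sup>2 else 0)"
    using fD by (intro sum.cong refl) auto
  also have "\<dots> \<le> pn R S E k"
    unfolding pn_def using fD NV finite_VG by (intro sum_mono2) auto
  finally show ?thesis .
qed

lemma e1_facts: "e1 < 0" "\<bar>e1\<bar> \<le> 7"
proof -
  have "sqrt 2 < sqrt 4" by (rule real_sqrt_less_mono) simp
  hence s: "sqrt 2 < 2" by simp
  have s0: "sqrt 2 \<ge> 0" by simp
  have e: "e1 = -1 - 3 * sqrt 2" unfolding e1_def by simp
  show n: "e1 < 0" using e s0 by linarith
  show "\<bar>e1\<bar> \<le> 7" using e s n by linarith
qed

lemma card_V0: "card V0 = 128"
proof -
  have e: "V0 = {..<2::nat} \<times> {1..8::nat} \<times> {..<8::nat}" unfolding V0_def by auto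
  have "card ({..<2::nat} \<times> {1..8::nat} \<times> {..<8::nat}) = 128" by (simp add: card_cartesian_product)
  thus ?thesis unfolding e .
qed

lemma blk_sum_real:
  assumes q: "q \<in> {1..R}"
  shows "(\<Sum>w\<in>VG R. if q = fst w then (g (snd w) :: real) else 0) = (\<Sum>b\<in>V0. g b)"
proof -
  have "(\<Sum>w\<in>VG R. if q = fst w then g (snd w) else 0)
      = (\<Sum>q'\<in>{1..R}. if q = q' then (\<Sum>b\<in>V0. g b) else 0)"
    unfolding VG_eq sum_prod_split by (intro sum.cong refl) auto
  also have "\<dots> = (\<Sum>b\<in>V0. g b)" using q by simp
  finally show ?thesis .
qed

lemma MS_ME_nonneg: "MS S u w \<ge> 0" "ME E u w \<ge> 0" "MS S u w \<le> 1" "ME E u w \<le> 1"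
  unfolding MS_def ME_def by auto

lemma row_MA:
  assumes g0: "g0_spec A0" and u: "u \<in> VG R"
  shows "(\<Sum>w\<in>VG R. \<bar>MA A0 u w\<bar>) \<le> 128"
proof -
  obtain q a where ua: "u = (q, a)" "q \<in> {1..R}" "a \<in> V0" using u unfolding VG_eq by auto
  have "(\<Sum>w\<in>VG R. \<bar>MA A0 u w\<bar>) = (\<Sum>w\<in>VG R. if q = fst w then \<bar>A0 a (snd w)\<bar> else 0)"
    unfolding ua MA_def by (intro sum.cong refl) auto
  also have "\<dots> = (\<Sum>b\<in>V0. \<bar>A0 a b\<bar>)" by (rule blk_sum_real[OF ua(2)])
  also have "\<dots> \<le> (\<Sum>b\<in>V0. 1)"
  proof (rule sum_mono)
    fix b assume "b \<in> V0"
    hence "A0 a b \<in> {0,1}" using g0_facts(2)[OF g0 ua(3)] by blast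
    thus "\<bar>A0 a b\<bar> \<le> 1" by auto
  qed
  also have "\<dots> = 128" using card_V0 by simp
  finally show ?thesis .
qed

lemma row_MS:
  assumes u: "u \<in> VG R"
  shows "(\<Sum>w\<in>VG R. MS S u w) \<le> 1"
proof -
  have "(\<Sum>w\<in>VG R. MS S u w) = (\<Sum>w\<in>VG R. if w = u then (if node u \<in> S then 1 else 0) else 0)"
    unfolding MS_def by (intro sum.cong refl) auto
  also have "\<dots> = (if node u \<in> S then 1 else 0)" using u finite_VG by simp
  finally show ?thesis by simp
qed

lemma row_ME:
  assumes gd: "gate_diagram R U S E" and u: "u \<in> VG R"
  shows "(\<Sum>w\<in>VG R. ME E u w) \<le> 2"
proof (cases "\<exists>p\<in>E. node u \<in> p")
  case False
  hence z: "\<And>w. ME E u w = 0" unfolding ME_def by auto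
  have "(\<Sum>w\<in>VG R. ME E u w) = 0" by (simp add: z)
  thus ?thesis by simp
next
  case True
  then obtain p0 where p0: "p0 \<in> E" "node u \<in> p0" by blast
  define g where "g = (\<lambda>n::nat \<times> nat \<times> nat. (fst n, fst (snd n), snd (snd n), jj u))"
  have le: "ME E u w \<le> (if w \<in> g ` p0 then 1 else 0)" for w
  proof (cases "ME E u w = 0")
    case True thus ?thesis by simp
  next
    case False
    then obtain p where p: "p \<in> E" "node u \<in> p" "node w \<in> p" and jw: "jj u = jj w"
      unfolding ME_def by (auto split: if_splits)
    have "p = p0" using gd_unique[OF gd p(1) p0(1) p(2) p0(2)] .
    hence "node w \<in> p0" using p(3) by simp
    moreover have "w = g (node w)" unfolding g_def node_def using jw unfolding jj_def
      by (cases w) auto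
    ultimately have "w \<in> g ` p0" by blast
    thus ?thesis using MS_ME_nonneg(4)[of E u w] by simp
  qed
  have "(\<Sum>w\<in>VG R. ME E u w) \<le> (\<Sum>w\<in>VG R. if w \<in> g ` p0 then 1 else 0)"
    by (intro sum_mono le)
  also have "\<dots> = real (card (VG R \<inter> g ` p0))"
    using finite_VG by (simp add: sum.If_cases)
  also have "card (VG R \<inter> g ` p0) \<le> card (g ` p0)"
  proof (rule card_mono)
    have "finite p0"
      using gd_E[OF gd p0(1)] diagram_nodes_finite finite_subset by blast
    thus "finite (g ` p0)" by simp
  qed auto
  also have "card (g ` p0) \<le> card p0" by (rule card_image_le) (use gd_E[OF gd p0(1)] diagram_nodes_finite finite_subset in blast)
  also have "card p0 \<le> 2" by (rule gd_E_card[OF gd p0(1)])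
  finally show ?thesis by simp
qed

lemma row_bound:
  assumes g0: "g0_spec A0" and gd: "gate_diagram R U S E" and u: "u \<in> VG R"
  shows "(\<Sum>w\<in>VG R. \<bar>shift (AG A0 S E) e1 u w\<bar>) \<le> 138"
proof -
  have "\<bar>shift (AG A0 S E) e1 u w\<bar> \<le> \<bar>MA A0 u w\<bar> + MS S u w + ME E u w + (if w = u then \<bar>e1\<bar> else 0)" for w
    unfolding shift_def AG_split using MS_ME_nonneg(1)[of S u w] MS_ME_nonneg(2)[of E u w] by (auto simp: abs_le_iff)
  hence "(\<Sum>w\<in>VG R. \<bar>shift (AG A0 S E) e1 u w\<bar>)
      \<le> (\<Sum>w\<in>VG R. \<bar>MA A0 u w\<bar> + MS S u w + ME E u w + (if w = u then \<bar>e1\<bar> else 0))"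
    by (intro sum_mono)
  also have "\<dots> = (\<Sum>w\<in>VG R. \<bar>MA A0 u w\<bar>) + (\<Sum>w\<in>VG R. MS S u w) + (\<Sum>w\<in>VG R. ME E u w) + \<bar>e1\<bar>"
    using u finite_VG by (simp add: sum.distrib)
  also have "\<dots> \<le> 128 + 1 + 2 + 7"
    using row_MA[OF g0 u] row_MS[OF u, of S] row_ME[OF gd u] e1_facts(2) by linarith
  finally show ?thesis by simp
qed

lemma diag_pos:
  assumes g0: "g0_spec A0" and u: "u \<in> VG R"
  shows "shift (AG A0 S E) e1 u u > 0"
proof -
  have "snd u \<in> V0" using u unfolding VG_eq by auto
  hence "MA A0 u u = 0" using g0_facts(3)[OF g0] unfolding MA_def by simp
  thus ?thesis unfolding shift_def AG_split using MS_ME_nonneg(1)[of S u u] MS_ME_nonneg(2)[of E u u] e1_facts(1) by simp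
qed


lemma final_arith:
  fixes g s a b p :: real
  assumes g0: "g \<ge> 0" and g1: "g \<le> 138" and a: "a \<ge> 0" and b: "b \<ge> 0" and ab: "a + b > 0"
    and main: "s * (a + b) \<ge> g * b + 2 * p" and p0: "p \<ge> 0" and p1: "p \<ge> a / 16 - b"
  shows "s \<ge> 2 / (33 * 138) * g"
proof (cases "b \<ge> a / 32")
  case True
  have "a + b \<le> 33 * b" using True by linarith
  hence "g * (a + b) \<le> g * (33 * b)" using g0 by (rule mult_left_mono)
  hence "g * (a + b) / 33 \<le> g * b" by simp
  also have "g * b \<le> s * (a + b)" using main p0 by linarith
  finally have "g / 33 * (a + b) \<le> s * (a + b)" by simp
  hence "g / 33 \<le> s" using ab by (simp add: mult_le_cancel_right)
  moreover have "2 / (33 * 138) * g \<le> g / 33" using g0 by simp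
  ultimately show ?thesis by linarith
next
  case False
  hence bl: "b < a / 32" by simp
  have "g * b \<ge> 0" using g0 b by simp
  hence "s * (a + b) \<ge> a / 16" using main p1 bl by linarith
  moreover have "a + b \<le> 33 / 32 * a" using bl by linarith
  moreover have ap: "a > 0" using bl b by linarith
  ultimately have "s * (33 / 32 * a) \<ge> a / 16"
  proof -
    have sp: "s \<ge> 0"
    proof (rule ccontr)
      assume "\<not> s \<ge> 0"
      hence "s * (a + b) < 0" using ab by (simp add: mult_neg_pos)
      thus False using \<open>s * (a + b) \<ge> a / 16\<close> ap by linarith
    qed
    have "s * (a + b) \<le> s * (33 / 32 * a)" using \<open>a + b \<le> 33 / 32 * a\<close> sp by (rule mult_left_mono)
    thus ?thesis using \<open>s * (a + b) \<ge> a / 16\<close> by linarith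
  qed
  hence "(2 / 33) * a \<le> s * a" by (simp add: field_simps)
  hence "2 / 33 \<le> s" using ap by (simp add: mult_le_cancel_right)
  moreover have "2 / (33 * 138) * g \<le> 2 / 33" using g1 g0 by simp
  ultimately show ?thesis by linarith
qed

lemma eig_qf: "in_eigenspace V M (complex_of_real \<mu>) x \<Longrightarrow> qf V M x = \<mu> * nrm V x"
  unfolding qf_def eig_mv(1)[of V M "complex_of_real \<mu>" x] cinner_scale_right cinner_self by simp

lemma mv_eig: "supp V x \<Longrightarrow> mv V M x = (\<lambda>v. \<mu> * x v) \<Longrightarrow> in_eigenspace V M \<mu> x"
  unfolding in_eigenspace_def supp_def mv_def by (metis)

lemma VSL_eq: "VSL R = VG R \<times> {0, 1}"
  unfolding VSL_def ..

lemma finite_VSL: "finite (VSL R)"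
  unfolding VSL_eq using finite_VG by simp

definition Pm :: "nat \<Rightarrow> (nat \<times> nat \<times> nat) set \<Rightarrow> (nat \<times> nat \<times> nat) set set \<Rightarrow> vtx \<Rightarrow> vtx \<Rightarrow> real" where
  "Pm R S E = (\<lambda>u w. if u = w \<and> u \<in> Nset R S E then 1 else 0)"

lemma shift_ASL:
  "shift (ASL A0 R S E) e1 (v, a) (w, b) = (if a = b then shift (AG A0 S E) e1 v w else 0) + Pm R S E v w"
  unfolding shift_def ASL_def Pm_def by auto

lemma asl_sum:
  assumes v: "v \<in> VG R" and a: "a \<in> {0, 1}"
  shows "(\<Sum>w\<in>VSL R. complex_of_real (shift (ASL A0 R S E) e1 (v, a) w) * x w)
      = (\<Sum>w\<in>VG R. complex_of_real (shift (AG A0 S E) e1 v w) * x (w, a))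
        + (if v \<in> Nset R S E then x (v, 0) + x (v, 1) else 0)"
proof -
  have "(\<Sum>w\<in>VSL R. complex_of_real (shift (ASL A0 R S E) e1 (v, a) w) * x w)
      = (\<Sum>w\<in>VG R. \<Sum>b\<in>{0,1::nat}. complex_of_real (shift (ASL A0 R S E) e1 (v, a) (w, b)) * x (w, b))"
    unfolding VSL_eq sum_prod_split ..
  also have "\<dots> = (\<Sum>w\<in>VG R. complex_of_real (shift (AG A0 S E) e1 v w) * x (w, a)
        + complex_of_real (Pm R S E v w) * (x (w, 0) + x (w, 1)))"
    unfolding shift_ASL using a by (intro sum.cong refl) (auto simp: algebra_simps)
  also have "\<dots> = (\<Sum>w\<in>VG R. complex_of_real (shift (AG A0 S E) e1 v w) * x (w, a))
        + (\<Sum>w\<in>VG R. complex_of_real (Pm R S E v w) * (x (w, 0) + x (w, 1)))"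
    by (rule sum.distrib)
  also have "(\<Sum>w\<in>VG R. complex_of_real (Pm R S E v w) * (x (w, 0) + x (w, 1)))
      = (\<Sum>w\<in>VG R. if w = v then (if v \<in> Nset R S E then x (v, 0) + x (v, 1) else 0) else 0)"
    unfolding Pm_def by (intro sum.cong refl) auto
  also have "\<dots> = (if v \<in> Nset R S E then x (v, 0) + x (v, 1) else 0)"
    using v finite_VG by simp
  finally show ?thesis .
qed

lemma symm_ASL:
  assumes g0: "g0_spec A0"
  shows "symm (VSL R) (shift (ASL A0 R S E) e1)"
proof -
  have s: "symm (VG R) (AG A0 S E)" by (rule symm_AG[OF g0])
  show ?thesis unfolding symm_def
  proof (intro ballI)
    fix u w assume u: "u \<in> VSL R" and w: "w \<in> VSL R"
    obtain v a where ua: "u = (v, a)" "v \<in> VG R" using u unfolding VSL_eq by auto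
    obtain v' b where wb: "w = (v', b)" "v' \<in> VG R" using w unfolding VSL_eq by auto
    have "shift (AG A0 S E) e1 v v' = shift (AG A0 S E) e1 v' v"
      using s ua(2) wb(2) unfolding symm_def shift_def by auto
    moreover have "Pm R S E v v' = Pm R S E v' v" unfolding Pm_def by auto
    ultimately show "shift (ASL A0 R S E) e1 u w = shift (ASL A0 R S E) e1 w u"
      unfolding ua(1) wb(1) shift_ASL by auto
  qed
qed

lemma Re_if_helper: "Re (cnj z * (if P then z else 0)) = (if P then (cmod z)\<^sup>2 else 0)"
  by (cases P) (simp_all only: if_True if_False Re_cnj_mult mult_zero_right zero_complex.sel)

lemma qf_Pm: "qf (VG R) (Pm R S E) x = pn R S E x"
proof -
  have "\<And>u. u \<in> VG R \<Longrightarrow> (\<Sum>w\<in>VG R. complex_of_real (Pm R S E u w) * x w) = (if u \<in> Nset R S E then x u else 0)"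
  proof -
    fix u assume u: "u \<in> VG R"
    have "(\<Sum>w\<in>VG R. complex_of_real (Pm R S E u w) * x w) = (\<Sum>w\<in>VG R. if w = u then (if u \<in> Nset R S E then x u else 0) else 0)"
      unfolding Pm_def by (intro sum.cong refl) auto
    also have "\<dots> = (if u \<in> Nset R S E then x u else 0)" using u finite_VG by simp
    finally show "(\<Sum>w\<in>VG R. complex_of_real (Pm R S E u w) * x w) = (if u \<in> Nset R S E then x u else 0)" .
  qed
  hence "qf (VG R) (Pm R S E) x = Re (\<Sum>u\<in>VG R. cnj (x u) * (if u \<in> Nset R S E then x u else 0))"
    unfolding qf_expr by (intro arg_cong[where f=Re] sum.cong refl) auto
  also have "\<dots> = pn R S E x"
    unfolding pn_def Re_sum by (intro sum.cong refl Re_if_helper)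
  finally show ?thesis .
qed

lemma qf_scaleM: "qf V (\<lambda>u w. c * M u w) x = c * qf V M x"
proof -
  have mvs: "mv V (\<lambda>u w. c * M u w) x = (\<lambda>u. complex_of_real c * mv V M x u)"
    unfolding mv_def by (auto simp: sum_distrib_left mult.assoc)
  show ?thesis unfolding qf_def mvs cinner_scale_right by simp
qed

lemma diff_sq_le: "(cmod (a - b))\<^sup>2 \<le> 2 * (cmod a)\<^sup>2 + 2 * (cmod b)\<^sup>2"
proof -
  have "(cmod (a + b))\<^sup>2 + (cmod (a - b))\<^sup>2 = 2 * (cmod a)\<^sup>2 + 2 * (cmod b)\<^sup>2" by (rule parallelogram_c)
  moreover have "(cmod (a + b))\<^sup>2 \<ge> 0" by simp
  ultimately show ?thesis by linarith
qed


lemma mv_at: "u \<in> V \<Longrightarrow> mv V M x u = (\<Sum>w\<in>V. complex_of_real (M u w) * x w)"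
  unfolding mv_def by simp

lemma sub_eqs:
  fixes A B P a b :: complex
  assumes "A + P = a" "B + P = b"
  shows "A - B = a - b" "(A + B) + 2 * P = a + b"
proof -
  have "A - B = (A + P) - (B + P)" by simp
  thus "A - B = a - b" unfolding assms .
  have "(A + B) + 2 * P = (A + P) + (B + P)" by simp
  thus "(A + B) + 2 * P = a + b" unfolding assms .
qed

lemma main_ineq:
  assumes g0: "g0_spec A0" and gd: "gate_diagram R U S E" and eg: "e1_gate_graph A0 R S E"
  shows "gamma (VSL R) (shift (ASL A0 R S E) e1) \<ge> 2 / (33 * 138) * gamma (VG R) (shift (AG A0 S E) e1)"
proof -
  define V where "V = VG R"
  define H where "H = shift (AG A0 S E) e1"
  have finV: "finite V" unfolding V_def by (rule finite_VG)
  have symH: "symm V H" unfolding V_def H_def by (rule symm_shift[OF symm_AG[OF g0]])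
  have smallG: "smallest_eigenvalue V (AG A0 S E) e1" using eg unfolding e1_gate_graph_def V_def .
  have psdH: "qf V H x \<ge> 0" if x: "supp V x" for x
  proof -
    have "qf V (AG A0 S E) x \<ge> e1 * nrm V x"
      by (rule smallest_psd[OF finV _ smallG x]) (unfold V_def, rule symm_AG[OF g0])
    thus ?thesis unfolding H_def qf_shift[OF finV x] by simp
  qed
  define K where "K = {k. supp V k \<and> mv V H k = (\<lambda>v. 0)}"
  define Kp where "Kp = {x. supp V x \<and> (\<forall>k\<in>K. cinner V k x = 0)}"
  have Ksupp: "\<And>x. x \<in> K \<Longrightarrow> supp V x" unfolding K_def by auto
  have Kadd: "\<And>x y. x \<in> K \<Longrightarrow> y \<in> K \<Longrightarrow> (\<lambda>v. x v + y v) \<in> K"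
    unfolding K_def supp_def by (auto simp: mv_add)
  have Kscale: "\<And>x c. x \<in> K \<Longrightarrow> (\<lambda>v. c * x v) \<in> K"
    unfolding K_def supp_def by (auto simp: mv_scale)
  have Kclosed: "closed K"
  proof -
    have Keq: "K = {x. supp V x} \<inter> (\<Inter>u. {x. mv V H x u = 0})" unfolding K_def by (auto simp: fun_eq_iff)
    have c: "closed {x::vtx \<Rightarrow> complex. mv V H x u = 0}" for u
      by (intro closed_Collect_eq mv_cont continuous_intros)
    show ?thesis unfolding Keq by (intro closed_Int closed_INT closed_supp ballI c)
  qed
  have K0: "(\<lambda>v. 0) \<in> K" unfolding K_def supp_def mv_def by auto
  have Kpsupp: "\<And>x. x \<in> Kp \<Longrightarrow> supp V x" unfolding Kp_def by auto
  have Kpadd: "\<And>x y. x \<in> Kp \<Longrightarrow> y \<in> Kp \<Longrightarrow> (\<lambda>v. x v + y v) \<in> Kp"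
    unfolding Kp_def supp_def by (auto simp: cinner_add_right)
  have Kpscale: "\<And>x c. x \<in> Kp \<Longrightarrow> (\<lambda>v. c * x v) \<in> Kp"
    unfolding Kp_def supp_def by (auto simp: cinner_scale_right)
  have Kpclosed: "closed Kp"
  proof -
    have "Kp = {x. supp V x} \<inter> (\<Inter>k\<in>K. {x. cinner V k x = 0})" unfolding Kp_def by auto
    moreover have "closed {x::vtx \<Rightarrow> complex. cinner V k x = 0}" for k
      by (intro closed_Collect_eq cinner_cont continuous_intros)
    ultimately show ?thesis using closed_supp by auto
  qed
  have Kpinv: "\<And>x. x \<in> Kp \<Longrightarrow> mv V H x \<in> Kp"
  proof -
    fix x assume x: "x \<in> Kp"
    have "cinner V k (mv V H x) = 0" if k: "k \<in> K" for k
    proof -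
      have "cinner V k (mv V H x) = cinner V (mv V H k) x" by (rule herm[OF symH])
      also have "\<dots> = 0" using k unfolding K_def by (simp add: cinner_zero_left)
      finally show ?thesis .
    qed
    thus "mv V H x \<in> Kp" unfolding Kp_def using supp_mv by blast
  qed
  obtain u0 where u0: "u0 \<in> V"
    using smallG unfolding smallest_eigenvalue_def is_eigenvalue_def by blast
  define e0 where "e0 = (\<lambda>v. if v = u0 then (1::complex) else 0)"
  have e0s: "supp V e0" using u0 unfolding e0_def supp_def by auto
  obtain k0 where k0: "k0 \<in> K" "\<forall>z\<in>K. cinner V z (\<lambda>v. e0 v - k0 v) = 0"
    using projection[OF finV Ksupp Kadd Kscale Kclosed K0 e0s] by blast
  define r0 where "r0 = (\<lambda>v. e0 v - k0 v)"
  have r0Kp: "r0 \<in> Kp" unfolding Kp_def r0_def using e0s Ksupp[OF k0(1)] k0(2) by (auto simp: supp_def)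
  have r0nz: "nrm V r0 \<noteq> 0"
  proof
    assume "nrm V r0 = 0"
    hence z: "\<forall>v\<in>V. r0 v = 0" using nrm_zero_iff[OF finV] by blast
    have "e0 = k0"
    proof
      fix v show "e0 v = k0 v"
      proof (cases "v \<in> V")
        case True thus ?thesis using z unfolding r0_def by simp
      next
        case False
        have "e0 v = 0" using False e0s unfolding supp_def by blast
        moreover have "k0 v = 0" using False Ksupp[OF k0(1)] unfolding supp_def by blast
        ultimately show ?thesis by simp
      qed
    qed
    hence "mv V H e0 = (\<lambda>v. 0)" using k0(1) unfolding K_def by auto
    hence "mv V H e0 u0 = 0" by simp
    moreover have "mv V H e0 u0 = complex_of_real (H u0 u0)"
    proof -
      have "mv V H e0 u0 = (\<Sum>w\<in>V. if w = u0 then complex_of_real (H u0 w) else 0)"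
        unfolding mv_at[OF u0] e0_def by (intro sum.cong refl) auto
      also have "\<dots> = complex_of_real (H u0 u0)" using u0 finV by simp
      finally show ?thesis .
    qed
    moreover have "H u0 u0 > 0" unfolding H_def using diag_pos[OF g0] u0 unfolding V_def by blast
    ultimately show False by simp
  qed
  obtain y where y: "y \<in> Kp" "nrm V y = 1" "mv V H y = (\<lambda>v. complex_of_real (qf V H y) * y v)"
    "\<forall>x\<in>Kp. qf V H x \<ge> qf V H y * nrm V x"
    using rayleigh_min[OF finV symH Kpsupp Kpadd Kpscale Kpclosed Kpinv r0Kp r0nz] by blast
  define m where "m = qf V H y"
  have ys: "supp V y" using y(1) Kpsupp by blast
  have yev: "in_eigenspace V H (complex_of_real m) y" using mv_eig[OF ys] y(3) unfolding m_def by simp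
  obtain vy where vy: "vy \<in> V" "y vy \<noteq> 0" using y(2) nrm_zero_iff[OF finV, of y] by auto
  have m0: "m \<noteq> 0"
  proof
    assume "m = 0"
    hence "y \<in> K" unfolding K_def using ys y(3) unfolding m_def by simp
    hence "cinner V y y = 0" using y(1) unfolding Kp_def by blast
    thus False using y(2) unfolding cinner_self by simp
  qed
  define SG where "SG = {x::real. x \<noteq> 0 \<and> is_eigenvalue V H (complex_of_real x)}"
  have SGfin: "finite SG" unfolding SG_def by (rule eig_finite[OF finV symH])
  have mSG: "m \<in> SG" unfolding SG_def is_eigenvalue_def using m0 yev vy by blast
  define g where "g = gamma V H"
  have g_eq: "g = Min SG" unfolding g_def gamma_def SG_def ..
  have gSG: "g \<in> SG" unfolding g_eq using SGfin mSG by (intro Min_in) auto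
  have lbG: "\<And>s. s \<in> SG \<Longrightarrow> g \<le> s" unfolding g_eq using SGfin by simp
  have "\<bar>m\<bar> \<le> 138"
    by (rule eig_bound[OF finV yev vy]) (unfold V_def H_def, rule row_bound[OF g0 gd])
  hence gle: "g \<le> 138" using lbG[OF mSG] by linarith
  have g0': "g \<ge> 0"
  proof -
    obtain x v where x: "in_eigenspace V H (complex_of_real g) x" "v \<in> V" "x v \<noteq> 0"
      using gSG unfolding SG_def is_eigenvalue_def by blast
    have "qf V H x = g * nrm V x" by (rule eig_qf[OF x(1)])
    moreover have "qf V H x \<ge> 0" by (rule psdH[OF eig_mv(2)[OF x(1)]])
    moreover have "nrm V x > 0" using x nrm_zero_iff[OF finV, of x] nrm_nonneg[of V x] by auto
    ultimately show ?thesis by (simp add: zero_le_mult_iff)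
  qed
  have qfKp: "qf V H x \<ge> g * nrm V x" if x: "x \<in> Kp" for x
  proof -
    have "qf V H x \<ge> m * nrm V x" using y(4) x unfolding m_def by blast
    moreover have "g * nrm V x \<le> m * nrm V x"
      using lbG[OF mSG] nrm_nonneg[of V x] by (rule mult_right_mono)
    ultimately show ?thesis by linarith
  qed
  define VL where "VL = VSL R"
  define HL where "HL = shift (ASL A0 R S E) e1"
  have finVL: "finite VL" unfolding VL_def by (rule finite_VSL)
  have symHL: "symm VL HL" unfolding VL_def HL_def by (rule symm_ASL[OF g0])
  define SSL where "SSL = {x::real. x \<noteq> 0 \<and> is_eigenvalue VL HL (complex_of_real x)}"
  have SSLfin: "finite SSL" unfolding SSL_def by (rule eig_finite[OF finVL symHL])
  have eqn: "(\<Sum>w\<in>V. complex_of_real (H v w) * x (w, a)) + (if v \<in> Nset R S E then x (v, 0) + x (v, 1) else 0)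
      = complex_of_real s * x (v, a)"
    if x: "in_eigenspace VL HL (complex_of_real s) x" and v: "v \<in> V" and a: "a \<in> {0, 1}" for x s v a
  proof -
    have "(v, a) \<in> VL" using v a unfolding VL_def VSL_eq V_def by auto
    hence "(\<Sum>w\<in>VL. complex_of_real (HL (v, a) w) * x w) = complex_of_real s * x (v, a)"
      using x unfolding in_eigenspace_def by blast
    thus ?thesis unfolding VL_def HL_def asl_sum[OF v[unfolded V_def] a] V_def H_def .
  qed
  have mSSL: "m \<in> SSL"
  proof -
    define xl where "xl = (\<lambda>(v, a). if v \<in> V \<and> a \<in> {0, 1::nat} then (if a = 0 then y v else - y v) else (0::complex))"
    have "in_eigenspace VL HL (complex_of_real m) xl"
      unfolding in_eigenspace_def
    proof (intro conjI allI impI ballI)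
      fix p assume "p \<notin> VL"
      thus "xl p = 0" unfolding xl_def VL_def VSL_eq V_def by (cases p) auto
    next
      fix p assume p: "p \<in> VL"
      then obtain v a where pa: "p = (v, a)" "v \<in> V" "a \<in> {0, 1::nat}" unfolding VL_def VSL_eq V_def by auto
      have hy: "(\<Sum>w\<in>V. complex_of_real (H v w) * y w) = complex_of_real m * y v"
        using y(3) mv_at[OF pa(2), of H y] unfolding m_def by simp
      have "(\<Sum>w\<in>VL. complex_of_real (HL p w) * xl w)
          = (\<Sum>w\<in>V. complex_of_real (H v w) * xl (w, a)) + (if v \<in> Nset R S E then xl (v, 0) + xl (v, 1) else 0)"
        unfolding pa(1) VL_def HL_def asl_sum[OF pa(2)[unfolded V_def] pa(3)] V_def H_def ..
      also have "(if v \<in> Nset R S E then xl (v, 0) + xl (v, 1) else 0) = 0"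
        using pa(2) unfolding xl_def by simp
      also have "(\<Sum>w\<in>V. complex_of_real (H v w) * xl (w, a))
          = (if a = 0 then 1 else -1) * (\<Sum>w\<in>V. complex_of_real (H v w) * y w)"
        unfolding sum_distrib_left using pa(3) unfolding xl_def by (intro sum.cong refl) auto
      finally show "(\<Sum>w\<in>VL. complex_of_real (HL p w) * xl w) = complex_of_real m * xl p"
        unfolding hy pa(1) xl_def using pa(2,3) by auto
    qed
    moreover have "(vy, 0) \<in> VL" "xl (vy, 0) \<noteq> 0" using vy unfolding VL_def VSL_eq V_def xl_def by auto
    ultimately show ?thesis unfolding SSL_def is_eigenvalue_def using m0 by blast
  qed
  have key: "2 / (33 * 138) * g \<le> s" if sS: "s \<in> SSL" for s
  proof -
    obtain x p1 where x: "in_eigenspace VL HL (complex_of_real s) x" and p1: "p1 \<in> VL" "x p1 \<noteq> 0"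
      and s0: "s \<noteq> 0" using sS unfolding SSL_def is_eigenvalue_def by blast
    obtain v1 a1 where pa: "p1 = (v1, a1)" "v1 \<in> V" "a1 \<in> {0, 1::nat}" using p1 unfolding VL_def VSL_eq V_def by auto
    define ym where "ym = (\<lambda>v. if v \<in> V then x (v, 0) - x (v, 1) else 0)"
    define yp where "yp = (\<lambda>v. if v \<in> V then x (v, 0) + x (v, 1) else 0)"
    have e0: "\<And>v. v \<in> V \<Longrightarrow> (\<Sum>w\<in>V. complex_of_real (H v w) * x (w, 0)) + (if v \<in> Nset R S E then x (v, 0) + x (v, 1) else 0)
      = complex_of_real s * x (v, 0)" using eqn[OF x] by simp
    have e1': "\<And>v. v \<in> V \<Longrightarrow> (\<Sum>w\<in>V. complex_of_real (H v w) * x (w, 1)) + (if v \<in> Nset R S E then x (v, 0) + x (v, 1) else 0)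
      = complex_of_real s * x (v, 1)" using eqn[OF x] by simp
    show ?thesis
    proof (cases "\<exists>v\<in>V. ym v \<noteq> 0")
      case True
      have "in_eigenspace V H (complex_of_real s) ym"
        unfolding in_eigenspace_def
      proof (intro conjI allI impI ballI)
        fix v assume "v \<notin> V" thus "ym v = 0" unfolding ym_def by simp
      next
        fix v assume v: "v \<in> V"
        have "(\<Sum>w\<in>V. complex_of_real (H v w) * ym w)
            = (\<Sum>w\<in>V. complex_of_real (H v w) * x (w, 0)) - (\<Sum>w\<in>V. complex_of_real (H v w) * x (w, 1))"
          unfolding sum_subtractf[symmetric] ym_def by (intro sum.cong refl) (auto simp: algebra_simps)
        also have "\<dots> = complex_of_real s * ym v"
          using sub_eqs(1)[OF e0[OF v] e1'[OF v]] v unfolding ym_def by (simp add: right_diff_distrib)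
        finally show "(\<Sum>w\<in>V. complex_of_real (H v w) * ym w) = complex_of_real s * ym v" .
      qed
      hence "s \<in> SG" unfolding SG_def is_eigenvalue_def using True s0 by blast
      hence "g \<le> s" by (rule lbG)
      moreover have "2 / (33 * 138) * g \<le> g" using g0' by simp
      ultimately show ?thesis by linarith
    next
      case False
      hence eq01: "\<And>v. v \<in> V \<Longrightarrow> x (v, 0) = x (v, 1)" unfolding ym_def by auto
      have ypnz: "yp v1 \<noteq> 0"
      proof -
        have "x (v1, 0) = x (v1, 1)" by (rule eq01[OF pa(2)])
        moreover have "x (v1, a1) \<noteq> 0" using p1 pa by simp
        ultimately have "x (v1, 0) \<noteq> 0" using pa(3) by auto
        thus ?thesis unfolding yp_def using pa(2) eq01[OF pa(2)] by simp
      qed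
      have yps: "supp V yp" unfolding yp_def supp_def by auto
      define H2 where "H2 = (\<lambda>u w. H u w + 2 * Pm R S E u w)"
      have "mv V H2 yp = (\<lambda>v. complex_of_real s * yp v)"
      proof
        fix v show "mv V H2 yp v = complex_of_real s * yp v"
        proof (cases "v \<in> V")
          case False thus ?thesis unfolding mv_def yp_def by simp
        next
          case v: True
          have pm: "(\<Sum>w\<in>V. complex_of_real (2 * Pm R S E v w) * yp w) = 2 * (if v \<in> Nset R S E then yp v else 0)"
          proof -
            have "(\<Sum>w\<in>V. complex_of_real (2 * Pm R S E v w) * yp w)
                = (\<Sum>w\<in>V. if w = v then 2 * (if v \<in> Nset R S E then yp v else 0) else 0)"
              unfolding Pm_def by (intro sum.cong refl) auto
            also have "\<dots> = 2 * (if v \<in> Nset R S E then yp v else 0)" using v finV by simp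
            finally show ?thesis .
          qed
          have hs: "(\<Sum>w\<in>V. complex_of_real (H v w) * yp w)
              = (\<Sum>w\<in>V. complex_of_real (H v w) * x (w, 0)) + (\<Sum>w\<in>V. complex_of_real (H v w) * x (w, 1))"
            unfolding sum.distrib[symmetric] yp_def by (intro sum.cong refl) (auto simp: algebra_simps)
          have "mv V H2 yp v = (\<Sum>w\<in>V. complex_of_real (H v w) * yp w) + (\<Sum>w\<in>V. complex_of_real (2 * Pm R S E v w) * yp w)"
            unfolding mv_at[OF v] H2_def sum.distrib[symmetric] by (intro sum.cong refl) (simp add: algebra_simps)
          also have "\<dots> = ((\<Sum>w\<in>V. complex_of_real (H v w) * x (w, 0)) + (\<Sum>w\<in>V. complex_of_real (H v w) * x (w, 1)))
               + 2 * (if v \<in> Nset R S E then x (v, 0) + x (v, 1) else 0)"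
          proof -
            have P: "(if v \<in> Nset R S E then yp v else 0) = (if v \<in> Nset R S E then x (v, 0) + x (v, 1) else 0)"
              using v unfolding yp_def by simp
            show ?thesis unfolding pm hs P ..
          qed
          also have "\<dots> = complex_of_real s * x (v, 0) + complex_of_real s * x (v, 1)"
            by (rule sub_eqs(2)[OF e0[OF v] e1'[OF v]])
          also have "\<dots> = complex_of_real s * yp v"
            using v unfolding yp_def by (simp add: distrib_left)
          finally show ?thesis .
        qed
      qed
      hence "qf V H2 yp = s * nrm V yp" by (intro eig_qf mv_eig[OF yps])
      moreover have "qf V H2 yp = qf V H yp + 2 * pn R S E yp"
        unfolding H2_def qf_addM qf_scaleM V_def qf_Pm ..
      ultimately have sy: "s * nrm V yp = qf V H yp + 2 * pn R S E yp" by simp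
      obtain k where k: "k \<in> K" "\<forall>z\<in>K. cinner V z (\<lambda>v. yp v - k v) = 0"
        using projection[OF finV Ksupp Kadd Kscale Kclosed K0 yps] by blast
      define r where "r = (\<lambda>v. yp v - k v)"
      have ks: "supp V k" and Hk: "mv V H k = (\<lambda>v. 0)" using k(1) unfolding K_def by auto
      have rKp: "r \<in> Kp" unfolding Kp_def r_def using yps ks k(2) by (auto simp: supp_def)
      have ypkr: "yp = (\<lambda>v. r v + complex_of_real 1 * k v)" unfolding r_def by auto
      have qfeq: "qf V H yp = qf V H r"
      proof -
        have "cinner V k (mv V H r) = cinner V (mv V H k) r" by (rule herm[OF symH])
        also have "\<dots> = 0" unfolding Hk by (simp add: cinner_zero_left)
        finally have c: "cinner V k (mv V H r) = 0" .
        have q: "qf V H k = 0" unfolding qf_def Hk by (simp add: cinner_zero_right)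
        show ?thesis unfolding ypkr qf_add[OF symH] c q by simp
      qed
      have nrmeq: "nrm V yp = nrm V r + nrm V k"
      proof -
        have "cinner V k r = 0" using rKp k(1) unfolding Kp_def by blast
        thus ?thesis unfolding ypkr nrm_add by simp
      qed
      have pk: "pn R S E k \<ge> nrm V k / 8"
        unfolding V_def by (rule kernel_mass[OF g0 gd ks[unfolded V_def] Hk[unfolded V_def H_def]])
      have pr: "pn R S E r \<le> nrm V r"
        unfolding pn_def nrm_def V_def by (intro sum_mono) auto
      have pyk: "pn R S E k \<le> 2 * pn R S E yp + 2 * pn R S E r"
      proof -
        have "pn R S E k \<le> (\<Sum>v\<in>VG R. 2 * (if v \<in> Nset R S E then (cmod (yp v))\<^sup>2 else 0)
                   + 2 * (if v \<in> Nset R S E then (cmod (r v))\<^sup>2 else 0))"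
          unfolding pn_def
        proof (intro sum_mono)
          fix v
          have "k v = yp v - r v" unfolding r_def by simp
          thus "(if v \<in> Nset R S E then (cmod (k v))\<^sup>2 else 0)
             \<le> 2 * (if v \<in> Nset R S E then (cmod (yp v))\<^sup>2 else 0) + 2 * (if v \<in> Nset R S E then (cmod (r v))\<^sup>2 else 0)"
            using diff_sq_le[of "yp v" "r v"] by auto
        qed
        also have "\<dots> = 2 * pn R S E yp + 2 * pn R S E r"
          unfolding pn_def by (simp add: sum.distrib sum_distrib_left)
        finally show ?thesis .
      qed
      have qr: "qf V H r \<ge> g * nrm V r" by (rule qfKp[OF rKp])
      have pn0: "pn R S E yp \<ge> 0" unfolding pn_def by (intro sum_nonneg) auto
      have ab: "nrm V k + nrm V r > 0"
      proof -
        have "nrm V yp \<noteq> 0" using ypnz pa(2) nrm_zero_iff[OF finV, of yp] by auto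
        thus ?thesis using nrmeq nrm_nonneg[of V yp] by linarith
      qed
      show ?thesis
      proof (rule final_arith[OF g0' gle nrm_nonneg nrm_nonneg ab _ pn0])
        show "g * nrm V r + 2 * pn R S E yp \<le> s * (nrm V k + nrm V r)"
          using sy qfeq qr nrmeq by (simp add: algebra_simps)
        show "nrm V k / 16 - nrm V r \<le> pn R S E yp" using pk pr pyk by linarith
      qed
    qed
  qed
  have SSLne: "SSL \<noteq> {}" using mSSL by blast
  have "gamma VL HL = Min SSL" unfolding gamma_def SSL_def ..
  moreover have "Min SSL \<in> SSL" using SSLfin SSLne by (rule Min_in)
  ultimately have "2 / (33 * 138) * g \<le> gamma VL HL" using key by simp
  thus ?thesis unfolding VL_def HL_def g_def V_def H_def .
qed

theorem lemma2:
  fixes A0 :: "nat \<times> nat \<times> nat \<Rightarrow> nat \<times> nat \<times> nat \<Rightarrow> real"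
  assumes "g0_spec A0"
  shows "\<exists>C>0. \<forall>R U S E. gate_diagram R U S E \<and> e1_gate_graph A0 R S E \<longrightarrow>
           gamma (VSL R) (shift (ASL A0 R S E) e1) \<ge> C * gamma (VG R) (shift (AG A0 S E) e1)"
proof (intro exI[of _ "2 / (33 * 138)"] conjI allI impI)
  show "(0::real) < 2 / (33 * 138)" by simp
  fix R U S E assume h: "gate_diagram R U S E \<and> e1_gate_graph A0 R S E"
  show "gamma (VSL R) (shift (ASL A0 R S E) e1) \<ge> 2 / (33 * 138) * gamma (VG R) (shift (AG A0 S E) e1)"
    using main_ineq[OF assms] h by blast
qed


end
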